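(* Let $L$ be the field of rational functions over $\mathbb{C}$ in independent indeterminates $\alpha_0,\alpha_1,x,\tau_0,\tau_1,\tau_2,\tau_0',\tau_1',\tau_2'$ (the $\tau_i'$ are new indeterminates), put $\alpha_2:=3-\alpha_0-\alpha_1$, and equip $L$ with the derivation $'$ given by $\alpha_i'=0$, $x'=1$, $(\tau_i)'=\tau_i'$, $(\tau_i')'=\tau_i\big(F_i''+(F_i')^2\big)$, where $F_j':=\tau_j'/\tau_j$ and $$F_i'':=-x(F_{i+1}'-F_{i+2}')-(F_i'-F_{i+1}')(F_i'-F_{i+2}')-\frac{\alpha_{i+1}-\alpha_{i+2}}{3}.$$ Then there are automorphisms $s_0,s_1,s_2,\pi$ of $L$ commuting with $'$ such that $s_i(x)=\pi(x)=x$, $$s_i(\alpha_i)=-\alpha_i,\ s_i(\alpha_j)=\alpha_j+\alpha_i\ (j\ne i),\ \pi(\alpha_j)=\alpha_{j+1},$$ $$s_i(\tau_i)=\frac{1}{\tau_i}(D_x+x)\,\tau_{i+1}\cdot\tau_{i+2}=\frac{\tau_{i+1}'\tau_{i+2}-\tau_{i+1}\tau_{i+2}'+x\tau_{i+1}\tau_{i+2}}{\tau_i},\quad s_i(\tau_j)=\tau_j\ (j\neq i),\quad \pi(\tau_j)=\tau_{j+1},$$ and they satisfy $s_i^2=1$, $s_is_{i+1}s_i=s_{i+1}s_is_{i+1}$, $\pi^3=1$, $\pi s_i=s_{i+1}\pi$; i.e. they give an action of $\widetilde W$ on $L$ by differential automorphisms. Moreover this action is compatible with the action on the $f$-variables: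 setting $\varphi_i:=\tau_{i+1}'/\tau_{i+1}-\tau_{i+2}'/\tau_{i+2}+x\in L$, one has for all $i,j$ $$s_j(\varphi_i)=R^{(j)}_i(\alpha;\varphi),\qquad \pi(\varphi_i)=\varphi_{i+1},$$ where $R^{(j)}_j=\varphi_j$, $R^{(j)}_{j+1}=\varphi_{j+1}-\alpha_j/\varphi_j$, $R^{(j)}_{j+2}=\varphi_{j+2}+\alpha_j/\varphi_j$ (the formulas $s_j(f_j)=f_j$, $s_j(f_{j+1})=f_{j+1}-\alpha_j/f_j$, $s_j(f_{j+2})=f_{j+2}+\alpha_j/f_j$, $\pi(f_i)=f_{i+1}$ with $f$ replaced by $\varphi$).
   Context: Indices are taken modulo 3. Hirota's bilinear operator: $(D_x+x)F\cdot G=F'G-FG'+xFG$. The derivation on $L$ encodes the bilinear system $(D_x^2-xD_x-(\alpha_i-\alpha_{i+1})/3)\tau_i\cdot\tau_{i+1}=0$ ($i=0,1,2$), and the elements $\varphi_i$ satisfy $\varphi_i'+\varphi_i(\varphi_{i+1}-\varphi_{i+2})=\alpha_i$, $\varphi_0+\varphi_1+\varphi_2=3x$ (fourth Painlevé equation in symmetric form), on which $\widetilde W$ acts by $s_j(f_j)=f_j$, $s_j(f_{j+1})=f_{j+1}-\alpha_j/f_j$, $s_j(f_{j+2})=f_{j+2}+\alpha_j/f_j$, $\pi(f_i)=f_{i+1}$. $\widetilde W$ is the extended affine Weyl group of type $A_2^{(1)}$ generated by $s_0,s_1,s_2,\pi$ with the displayed relations. *)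

theory Defs
  imports Complex_Main "HOL-Computational_Algebra.Polynomial" "HOL-Computational_Algebra.Fraction_Field"
begin

text \<open>Level 0 carries alpha0, level 1 alpha1, level 2 x,
levels 3,4,5 carry tau0, tau1, tau2 and levels 6,7,8 carry tau0', tau1', tau2'.\<close>

type_synonym R = "complex poly poly poly poly poly poly poly poly poly"

type_synonym L = "R fract"

definition cst :: "'a::zero \<Rightarrow> 'a poly" where "cst a = [:a:]"

definition genR :: "nat \<Rightarrow> R" where
  "genR k =
    (if k = 0 then cst (cst (cst (cst (cst (cst (cst (cst ([:0,1:] :: complex poly))))))))
     else if k = 1 then cst (cst (cst (cst (cst (cst (cst ([:0,1:] :: complex poly poly)))))))
     else if k = 2 then cst (cst (cst (cst (cst (cst ([:0,1:] :: complex poly poly poly))))))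
     else if k = 3 then cst (cst (cst (cst (cst ([:0,1:] :: complex poly poly poly poly)))))
     else if k = 4 then cst (cst (cst (cst ([:0,1:] :: complex poly poly poly poly poly))))
     else if k = 5 then cst (cst (cst ([:0,1:] :: complex poly poly poly poly poly poly)))
     else if k = 6 then cst (cst ([:0,1:] :: complex poly poly poly poly poly poly poly))
     else if k = 7 then cst ([:0,1:] :: complex poly poly poly poly poly poly poly poly)
     else ([:0,1:] :: R))"

definition gen :: "nat \<Rightarrow> L" where "gen k = Fract (genR k) 1"

definition constC :: "complex \<Rightarrow> L" where
  "constC c = Fract (cst (cst (cst (cst (cst (cst (cst (cst (cst c))))))))) 1"

definition xL :: L where "xL = gen 2"

definition alpha :: "nat \<Rightarrow> L" where
  "alpha i = (if i mod 3 = 0 then gen 0 else if i mod 3 = 1 then gen 1 else 3 - gen 0 - gen 1)"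

definition tau :: "nat \<Rightarrow> L" where "tau i = gen (3 + i mod 3)"

definition taup :: "nat \<Rightarrow> L" where "taup i = gen (6 + i mod 3)"

definition F1 :: "nat \<Rightarrow> L" where "F1 j = taup j / tau j"

definition F2 :: "nat \<Rightarrow> L" where
  "F2 i = - xL * (F1 (i+1) - F1 (i+2)) - (F1 i - F1 (i+1)) * (F1 i - F1 (i+2))
          - (alpha (i+1) - alpha (i+2)) / 3"

definition is_C_derivation :: "(L \<Rightarrow> L) \<Rightarrow> bool" where
  "is_C_derivation D \<longleftrightarrow>
     (\<forall>a b. D (a + b) = D a + D b) \<and>
     (\<forall>a b. D (a * b) = D a * b + a * D b) \<and>
     (\<forall>c. D (constC c) = 0)"

definition is_prime_derivation :: "(L \<Rightarrow> L) \<Rightarrow> bool" where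
  "is_prime_derivation D \<longleftrightarrow>
     is_C_derivation D \<and>
     (\<forall>i. D (alpha i) = 0) \<and> D xL = 1 \<and>
     (\<forall>i. D (tau i) = taup i) \<and>
     (\<forall>i. D (taup i) = tau i * (F2 i + (F1 i)\<^sup>2))"

definition diff_aut :: "(L \<Rightarrow> L) \<Rightarrow> (L \<Rightarrow> L) \<Rightarrow> bool" where
  "diff_aut D f \<longleftrightarrow>
     bij f \<and>
     (\<forall>a b. f (a + b) = f a + f b) \<and>
     (\<forall>a b. f (a * b) = f a * f b) \<and>
     f 1 = 1 \<and>
     (\<forall>c. f (constC c) = constC c) \<and>
     (\<forall>a. f (D a) = D (f a))"

text \<open>Hirota: (D_x + x) F . G = F' G - F G' + x F G.\<close>
definition hirota :: "(L \<Rightarrow> L) \<Rightarrow> L \<Rightarrow> L \<Rightarrow> L" where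
  "hirota D F G = D F * G - F * D G + xL * F * G"

definition phi :: "nat \<Rightarrow> L" where
  "phi i = taup (i+1) / tau (i+1) - taup (i+2) / tau (i+2) + xL"

end

theory Submission
  imports Defs
begin

definition hom :: "('a::comm_ring_1 \<Rightarrow> L) \<Rightarrow> bool" where
  "hom f \<longleftrightarrow> (\<forall>a b. f (a+b) = f a + f b) \<and> (\<forall>a b. f (a*b) = f a * f b) \<and> f 1 = 1"

lemma hom_0: "hom f \<Longrightarrow> f 0 = 0"
  unfolding hom_def by (metis add_cancel_right_right add_0)

lemma hom_add: "hom f \<Longrightarrow> f (a+b) = f a + f b" unfolding hom_def by blast
lemma hom_mult: "hom f \<Longrightarrow> f (a*b) = f a * f b" unfolding hom_def by blast
lemma hom_1: "hom f \<Longrightarrow> f 1 = 1" unfolding hom_def by blast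

definition evp :: "('a::comm_ring_1 \<Rightarrow> L) \<Rightarrow> L \<Rightarrow> 'a poly \<Rightarrow> L" where
  "evp f y p = poly (map_poly f p) y"

lemma evp_pCons: "hom f \<Longrightarrow> evp f y (pCons a p) = f a + y * evp f y p"
  unfolding evp_def by (simp add: map_poly_pCons hom_0)

lemma evp_0: "evp f y 0 = 0" unfolding evp_def by simp

lemma evp_add: "hom f \<Longrightarrow> evp f y (p + q) = evp f y p + evp f y q"
proof (induction p arbitrary: q)
  case (pCons a p)
  show ?case
  proof -
    obtain b q' where qq: "q = pCons b q'" by (cases q) auto
    have hf: "hom f" by (rule pCons.prems)
    have "evp f y (pCons a p + q) = evp f y (pCons (a+b) (p+q'))" using qq by simp
    also have "\<dots> = f (a+b) + y * evp f y (p+q')" by (rule evp_pCons[OF hf])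
    also have "\<dots> = (f a + y * evp f y p) + (f b + y * evp f y q')"
    proof -
      have "evp f y (p+q') = evp f y p + evp f y q'" by (rule pCons.IH[OF hf])
      moreover have "f (a+b) = f a + f b" by (rule hom_add[OF hf])
      ultimately show ?thesis by (simp add: algebra_simps)
    qed
    finally show ?thesis using qq by (simp add: evp_pCons[OF hf])
  qed
qed (simp add: evp_0)

lemma evp_smult: "hom f \<Longrightarrow> evp f y (smult a p) = f a * evp f y p"
  by (induction p) (simp_all add: evp_0 evp_pCons hom_mult algebra_simps)

lemma evp_mult: "hom f \<Longrightarrow> evp f y (p * q) = evp f y p * evp f y q"
proof (induction p)
  case (pCons a p)
  have "pCons a p * q = smult a q + pCons 0 (p * q)" by simp
  then show ?case using pCons by (simp add: evp_add evp_smult evp_pCons hom_0 algebra_simps)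
qed (simp add: evp_0)

lemma evp_1: "hom f \<Longrightarrow> evp f y 1 = 1"
  by (simp add: one_pCons evp_pCons evp_0 hom_1 del: pCons_one)

lemma hom_evp[simp]: "hom f \<Longrightarrow> hom (evp f y)"
  unfolding hom_def[of "evp f y"] by (simp add: evp_add evp_mult evp_1)

lemma evp_const[simp]: "hom f \<Longrightarrow> evp f y [:a:] = f a"
  by (simp add: evp_pCons evp_0)

lemma evp_X[simp]: "hom f \<Longrightarrow> evp f y [:0,1:] = y"
  by (simp add: evp_pCons evp_0 hom_0 hom_1)

lemma hom_constC[simp]: "hom constC"
  unfolding hom_def constC_def cst_def by (simp add: One_fract_def pCons_one mult.commute)

definition ev :: "(nat \<Rightarrow> L) \<Rightarrow> R \<Rightarrow> L" where
  "ev y = evp (evp (evp (evp (evp (evp (evp (evp (evp constC (y 0)) (y 1)) (y 2)) (y 3)) (y 4)) (y 5)) (y 6)) (y 7)) (y 8)"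

lemma hom_ev: "hom (ev y)" unfolding ev_def by simp

lemma ev_genR: "k \<le> 8 \<Longrightarrow> ev y (genR k) = y k"
proof -
  assume "k \<le> 8"
  then have "k \<in> {0,1,2,3,4,5,6,7,8}" by auto
  then show ?thesis unfolding ev_def genR_def cst_def by auto
qed

lemma ev_const: "ev y (cst (cst (cst (cst (cst (cst (cst (cst (cst c))))))))) = constC c"
  unfolding ev_def cst_def by simp

lemma poly_gen_induct:
  fixes P :: "'a::comm_ring_1 poly \<Rightarrow> bool"
  assumes "\<And>a. P [:a:]" "P [:0,1:]" "\<And>p q. P p \<Longrightarrow> P q \<Longrightarrow> P (p+q)"
    "\<And>p q. P p \<Longrightarrow> P q \<Longrightarrow> P (p*q)"
  shows "P p"
proof (induction p)
  case 0
  then show ?case using assms(1)[of 0] by simp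
next
  case (pCons a p)
  have "pCons a p = [:a:] + [:0,1:] * p" by simp
  then show ?case using assms pCons by metis
qed

lemma R_induct:
  fixes P :: "R \<Rightarrow> bool"
  assumes add: "\<And>p q. P p \<Longrightarrow> P q \<Longrightarrow> P (p+q)"
    and mul: "\<And>p q. P p \<Longrightarrow> P q \<Longrightarrow> P (p*q)"
    and cs: "\<And>c. P (cst (cst (cst (cst (cst (cst (cst (cst (cst c)))))))))"
    and gs: "\<And>k. k \<le> 8 \<Longrightarrow> P (genR k)"
  shows "P r"
proof -
  have L0: "\<And>c. P [:[:[:[:[:[:[:[:[:c:]:]:]:]:]:]:]:]:]" using cs unfolding cst_def .
  have L1: "\<And>a::complex poly. P [:[:[:[:[:[:[:[:a:]:]:]:]:]:]:]:]"
  proof -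
    fix a :: "complex poly"
    show "P [:[:[:[:[:[:[:[:a:]:]:]:]:]:]:]:]"
    proof (rule poly_gen_induct[where P="\<lambda>a. P [:[:[:[:[:[:[:[:a:]:]:]:]:]:]:]:]"])
      show "\<And>a. P [:[:[:[:[:[:[:[:[:a:]:]:]:]:]:]:]:]:]" by (rule L0)
      show "P [:[:[:[:[:[:[:[:[:0,1:]:]:]:]:]:]:]:]:]" using gs[of 0] unfolding genR_def cst_def by simp
      show "\<And>p q. P [:[:[:[:[:[:[:[:p:]:]:]:]:]:]:]:] \<Longrightarrow> P [:[:[:[:[:[:[:[:q:]:]:]:]:]:]:]:] \<Longrightarrow> P [:[:[:[:[:[:[:[:(p+q):]:]:]:]:]:]:]:]" using add by fastforce
      show "\<And>p q. P [:[:[:[:[:[:[:[:p:]:]:]:]:]:]:]:] \<Longrightarrow> P [:[:[:[:[:[:[:[:q:]:]:]:]:]:]:]:] \<Longrightarrow> P [:[:[:[:[:[:[:[:(p*q):]:]:]:]:]:]:]:]" using mul by fastforce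
    qed
  qed
  have L2: "\<And>a::complex poly poly. P [:[:[:[:[:[:[:a:]:]:]:]:]:]:]"
  proof -
    fix a :: "complex poly poly"
    show "P [:[:[:[:[:[:[:a:]:]:]:]:]:]:]"
    proof (rule poly_gen_induct[where P="\<lambda>a. P [:[:[:[:[:[:[:a:]:]:]:]:]:]:]"])
      show "\<And>a. P [:[:[:[:[:[:[:[:a:]:]:]:]:]:]:]:]" by (rule L1)
      show "P [:[:[:[:[:[:[:[:0,1:]:]:]:]:]:]:]:]" using gs[of 1] unfolding genR_def cst_def by simp
      show "\<And>p q. P [:[:[:[:[:[:[:p:]:]:]:]:]:]:] \<Longrightarrow> P [:[:[:[:[:[:[:q:]:]:]:]:]:]:] \<Longrightarrow> P [:[:[:[:[:[:[:(p+q):]:]:]:]:]:]:]" using add by fastforce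
      show "\<And>p q. P [:[:[:[:[:[:[:p:]:]:]:]:]:]:] \<Longrightarrow> P [:[:[:[:[:[:[:q:]:]:]:]:]:]:] \<Longrightarrow> P [:[:[:[:[:[:[:(p*q):]:]:]:]:]:]:]" using mul by fastforce
    qed
  qed
  have L3: "\<And>a::complex poly poly poly. P [:[:[:[:[:[:a:]:]:]:]:]:]"
  proof -
    fix a :: "complex poly poly poly"
    show "P [:[:[:[:[:[:a:]:]:]:]:]:]"
    proof (rule poly_gen_induct[where P="\<lambda>a. P [:[:[:[:[:[:a:]:]:]:]:]:]"])
      show "\<And>a. P [:[:[:[:[:[:[:a:]:]:]:]:]:]:]" by (rule L2)
      show "P [:[:[:[:[:[:[:0,1:]:]:]:]:]:]:]" using gs[of 2] unfolding genR_def cst_def by simp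
      show "\<And>p q. P [:[:[:[:[:[:p:]:]:]:]:]:] \<Longrightarrow> P [:[:[:[:[:[:q:]:]:]:]:]:] \<Longrightarrow> P [:[:[:[:[:[:(p+q):]:]:]:]:]:]" using add by fastforce
      show "\<And>p q. P [:[:[:[:[:[:p:]:]:]:]:]:] \<Longrightarrow> P [:[:[:[:[:[:q:]:]:]:]:]:] \<Longrightarrow> P [:[:[:[:[:[:(p*q):]:]:]:]:]:]" using mul by fastforce
    qed
  qed
  have L4: "\<And>a::complex poly poly poly poly. P [:[:[:[:[:a:]:]:]:]:]"
  proof -
    fix a :: "complex poly poly poly poly"
    show "P [:[:[:[:[:a:]:]:]:]:]"
    proof (rule poly_gen_induct[where P="\<lambda>a. P [:[:[:[:[:a:]:]:]:]:]"])
      show "\<And>a. P [:[:[:[:[:[:a:]:]:]:]:]:]" by (rule L3)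
      show "P [:[:[:[:[:[:0,1:]:]:]:]:]:]" using gs[of 3] unfolding genR_def cst_def by simp
      show "\<And>p q. P [:[:[:[:[:p:]:]:]:]:] \<Longrightarrow> P [:[:[:[:[:q:]:]:]:]:] \<Longrightarrow> P [:[:[:[:[:(p+q):]:]:]:]:]" using add by fastforce
      show "\<And>p q. P [:[:[:[:[:p:]:]:]:]:] \<Longrightarrow> P [:[:[:[:[:q:]:]:]:]:] \<Longrightarrow> P [:[:[:[:[:(p*q):]:]:]:]:]" using mul by fastforce
    qed
  qed
  have L5: "\<And>a::complex poly poly poly poly poly. P [:[:[:[:a:]:]:]:]"
  proof -
    fix a :: "complex poly poly poly poly poly"
    show "P [:[:[:[:a:]:]:]:]"
    proof (rule poly_gen_induct[where P="\<lambda>a. P [:[:[:[:a:]:]:]:]"])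
      show "\<And>a. P [:[:[:[:[:a:]:]:]:]:]" by (rule L4)
      show "P [:[:[:[:[:0,1:]:]:]:]:]" using gs[of 4] unfolding genR_def cst_def by simp
      show "\<And>p q. P [:[:[:[:p:]:]:]:] \<Longrightarrow> P [:[:[:[:q:]:]:]:] \<Longrightarrow> P [:[:[:[:(p+q):]:]:]:]" using add by fastforce
      show "\<And>p q. P [:[:[:[:p:]:]:]:] \<Longrightarrow> P [:[:[:[:q:]:]:]:] \<Longrightarrow> P [:[:[:[:(p*q):]:]:]:]" using mul by fastforce
    qed
  qed
  have L6: "\<And>a::complex poly poly poly poly poly poly. P [:[:[:a:]:]:]"
  proof -
    fix a :: "complex poly poly poly poly poly poly"
    show "P [:[:[:a:]:]:]"
    proof (rule poly_gen_induct[where P="\<lambda>a. P [:[:[:a:]:]:]"])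
      show "\<And>a. P [:[:[:[:a:]:]:]:]" by (rule L5)
      show "P [:[:[:[:0,1:]:]:]:]" using gs[of 5] unfolding genR_def cst_def by simp
      show "\<And>p q. P [:[:[:p:]:]:] \<Longrightarrow> P [:[:[:q:]:]:] \<Longrightarrow> P [:[:[:(p+q):]:]:]" using add by fastforce
      show "\<And>p q. P [:[:[:p:]:]:] \<Longrightarrow> P [:[:[:q:]:]:] \<Longrightarrow> P [:[:[:(p*q):]:]:]" using mul by fastforce
    qed
  qed
  have L7: "\<And>a::complex poly poly poly poly poly poly poly. P [:[:a:]:]"
  proof -
    fix a :: "complex poly poly poly poly poly poly poly"
    show "P [:[:a:]:]"
    proof (rule poly_gen_induct[where P="\<lambda>a. P [:[:a:]:]"])
      show "\<And>a. P [:[:[:a:]:]:]" by (rule L6)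
      show "P [:[:[:0,1:]:]:]" using gs[of 6] unfolding genR_def cst_def by simp
      show "\<And>p q. P [:[:p:]:] \<Longrightarrow> P [:[:q:]:] \<Longrightarrow> P [:[:(p+q):]:]" using add by fastforce
      show "\<And>p q. P [:[:p:]:] \<Longrightarrow> P [:[:q:]:] \<Longrightarrow> P [:[:(p*q):]:]" using mul by fastforce
    qed
  qed
  have L8: "\<And>a::complex poly poly poly poly poly poly poly poly. P [:a:]"
  proof -
    fix a :: "complex poly poly poly poly poly poly poly poly"
    show "P [:a:]"
    proof (rule poly_gen_induct[where P="\<lambda>a. P [:a:]"])
      show "\<And>a. P [:[:a:]:]" by (rule L7)
      show "P [:[:0,1:]:]" using gs[of 7] unfolding genR_def cst_def by simp
      show "\<And>p q. P [:p:] \<Longrightarrow> P [:q:] \<Longrightarrow> P [:(p+q):]" using add by fastforce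
      show "\<And>p q. P [:p:] \<Longrightarrow> P [:q:] \<Longrightarrow> P [:(p*q):]" using mul by fastforce
    qed
  qed
  have L9: "\<And>a::R. P a"
  proof -
    fix a :: "R"
    show "P a"
    proof (rule poly_gen_induct[where P="\<lambda>a. P a"])
      show "\<And>a. P [:a:]" by (rule L8)
      show "P [:0,1:]" using gs[of 8] unfolding genR_def cst_def by simp
      show "\<And>p q. P p \<Longrightarrow> P q \<Longrightarrow> P (p+q)" using add by fastforce
      show "\<And>p q. P p \<Longrightarrow> P q \<Longrightarrow> P (p*q)" using mul by fastforce
    qed
  qed
  show ?thesis by (rule L9)
qed

lemma ev_0[simp]: "ev y 0 = 0" using hom_0[OF hom_ev] .
lemma ev_1[simp]: "ev y 1 = 1" using hom_1[OF hom_ev] .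
lemma ev_add: "ev y (a+b) = ev y a + ev y b" using hom_add[OF hom_ev] .
lemma ev_mult: "ev y (a*b) = ev y a * ev y b" using hom_mult[OF hom_ev] .
lemma ev_uminus: "ev y (-a) = - ev y a"
proof -
  have "ev y (-a) + ev y a = 0" by (simp add: ev_add[symmetric])
  then show ?thesis by (simp add: eq_neg_iff_add_eq_0)
qed

definition inA :: "(nat \<Rightarrow> L) \<Rightarrow> L \<Rightarrow> bool" where
  "inA y q \<longleftrightarrow> (\<exists>a b. q = Fract a b \<and> ev y b \<noteq> 0)"

definition Phi :: "(nat \<Rightarrow> L) \<Rightarrow> L \<Rightarrow> L" where
  "Phi y q = (SOME v. \<exists>a b. q = Fract a b \<and> ev y b \<noteq> 0 \<and> v = ev y a / ev y b)"

lemma Phi_Fract: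
  assumes "ev y b \<noteq> 0"
  shows "Phi y (Fract a b) = ev y a / ev y b"
  unfolding Phi_def
proof (rule someI2)
  show "\<exists>a' b'. Fract a b = Fract a' b' \<and> ev y b' \<noteq> 0 \<and> ev y a / ev y b = ev y a' / ev y b'"
    using assms by blast
next
  fix v assume "\<exists>a' b'. Fract a b = Fract a' b' \<and> ev y b' \<noteq> 0 \<and> v = ev y a' / ev y b'"
  then obtain c d where cd: "Fract a b = Fract c d" "ev y d \<noteq> 0" "v = ev y c / ev y d" by blast
  have "b \<noteq> 0" using assms by auto
  moreover have "d \<noteq> 0" using cd by auto
  ultimately have "a * d = c * b" using cd(1) eq_fract(1) by blast
  then have "ev y a * ev y d = ev y c * ev y b" by (metis ev_mult)
  then have "ev y c / ev y d = ev y a / ev y b" using cd(2) assms by (simp add: frac_eq_eq algebra_simps)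
  then show "v = ev y a / ev y b" using cd by simp
qed

lemma inA_E:
  assumes "inA y q"
  obtains a b where "q = Fract a b" "b \<noteq> 0" "ev y b \<noteq> 0"
  using assms unfolding inA_def by (metis ev_0)

lemma inA_I: "q = Fract a b \<Longrightarrow> ev y b \<noteq> 0 \<Longrightarrow> inA y q"
  unfolding inA_def by blast

lemma inA_add[simp]: "inA y q \<Longrightarrow> inA y r \<Longrightarrow> inA y (q + r)"
  and Phi_add[simp]: "inA y q \<Longrightarrow> inA y r \<Longrightarrow> Phi y (q + r) = Phi y q + Phi y r"
proof -
  assume "inA y q" "inA y r"
  then obtain a b c d where q: "q = Fract a b" "b \<noteq> 0" "ev y b \<noteq> 0"
    and r: "r = Fract c d" "d \<noteq> 0" "ev y d \<noteq> 0" by (metis inA_E)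
  have e: "q + r = Fract (a*d + c*b) (b*d)" using q r by simp
  have n: "ev y (b*d) \<noteq> 0" using q r by (simp add: ev_mult)
  show "inA y (q + r)" using e n by (rule inA_I)
  show "Phi y (q + r) = Phi y q + Phi y r"
    unfolding e using n q r by (simp add: Phi_Fract ev_mult ev_add field_simps)
qed

lemma inA_mult[simp]: "inA y q \<Longrightarrow> inA y r \<Longrightarrow> inA y (q * r)"
  and Phi_mult[simp]: "inA y q \<Longrightarrow> inA y r \<Longrightarrow> Phi y (q * r) = Phi y q * Phi y r"
proof -
  assume "inA y q" "inA y r"
  then obtain a b c d where q: "q = Fract a b" "b \<noteq> 0" "ev y b \<noteq> 0"
    and r: "r = Fract c d" "d \<noteq> 0" "ev y d \<noteq> 0" by (metis inA_E)
  have e: "q * r = Fract (a*c) (b*d)" using q r by simp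
  have n: "ev y (b*d) \<noteq> 0" using q r by (simp add: ev_mult)
  show "inA y (q * r)" using e n by (rule inA_I)
  show "Phi y (q * r) = Phi y q * Phi y r"
    unfolding e using n q r by (simp add: Phi_Fract ev_mult)
qed

lemma inA_uminus[simp]: "inA y q \<Longrightarrow> inA y (- q)"
  and Phi_uminus[simp]: "inA y q \<Longrightarrow> Phi y (- q) = - Phi y q"
proof -
  assume "inA y q"
  then obtain a b where q: "q = Fract a b" "b \<noteq> 0" "ev y b \<noteq> 0" by (metis inA_E)
  have e: "- q = Fract (-a) b" using q by simp
  show "inA y (- q)" using e q(3) by (rule inA_I)
  show "Phi y (- q) = - Phi y q"
    unfolding e using q by (simp add: Phi_Fract ev_uminus)
qed

lemma inA_diff[simp]: "inA y q \<Longrightarrow> inA y r \<Longrightarrow> inA y (q - r)"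
  by (simp add: diff_conv_add_uminus del: add_uminus_conv_diff)

lemma Phi_diff[simp]: "inA y q \<Longrightarrow> inA y r \<Longrightarrow> Phi y (q - r) = Phi y q - Phi y r"
  by (simp add: diff_conv_add_uminus del: add_uminus_conv_diff)

lemma inA_div[simp]: "inA y q \<Longrightarrow> inA y r \<Longrightarrow> Phi y r \<noteq> 0 \<Longrightarrow> inA y (q / r)"
  and Phi_div[simp]: "inA y q \<Longrightarrow> inA y r \<Longrightarrow> Phi y r \<noteq> 0 \<Longrightarrow> Phi y (q / r) = Phi y q / Phi y r"
proof -
  assume "inA y q" "inA y r" and nz: "Phi y r \<noteq> 0"
  then obtain a b c d where q: "q = Fract a b" "b \<noteq> 0" "ev y b \<noteq> 0"
    and r: "r = Fract c d" "d \<noteq> 0" "ev y d \<noteq> 0" by (metis inA_E)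
  have c: "ev y c \<noteq> 0" using nz r by (simp add: Phi_Fract)
  have e: "q / r = Fract (a*d) (b*c)" using q r by simp
  have n: "ev y (b*c) \<noteq> 0" using q c by (simp add: ev_mult)
  show "inA y (q / r)" using e n by (rule inA_I)
  show "Phi y (q / r) = Phi y q / Phi y r"
    unfolding e using n q r c by (simp add: Phi_Fract ev_mult)
qed

lemma inA_Fract1: "inA y (Fract a 1)"
  unfolding inA_def by (rule exI[of _ a], rule exI[of _ 1]) simp

lemma Phi_Fract1: "Phi y (Fract a 1) = ev y a"
  by (simp add: Phi_Fract)

lemma inA_gen[simp]: "inA y (gen k)"
  unfolding gen_def by (rule inA_Fract1)

lemma Phi_gen[simp]: "k \<le> 8 \<Longrightarrow> Phi y (gen k) = y k"
  unfolding gen_def by (simp add: Phi_Fract1 ev_genR)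

lemma inA_constC[simp]: "inA y (constC c)"
  unfolding constC_def by (rule inA_Fract1)

lemma Phi_constC[simp]: "Phi y (constC c) = constC c"
  unfolding constC_def by (simp add: Phi_Fract1 ev_const[unfolded constC_def])

lemma ev_of_nat: "ev y (of_nat n) = of_nat n"
  by (induction n) (simp_all add: ev_add)

lemma inA_of_nat[simp]: "inA y (of_nat n)"
  unfolding of_nat_fract by (rule inA_Fract1)

lemma Phi_of_nat[simp]: "Phi y (of_nat n) = of_nat n"
proof -
  have "(of_nat n :: L) = Fract (of_nat n) 1" by (rule of_nat_fract)
  then show ?thesis by (metis Phi_Fract1 ev_of_nat)
qed

lemma inA_numeral[simp]: "inA y (numeral n)"
  using inA_of_nat[of y "numeral n"] by simp

lemma Phi_numeral[simp]: "Phi y (numeral n) = numeral n"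
  using Phi_of_nat[of y "numeral n"] by simp

lemma inA_1[simp]: "inA y 1" using inA_of_nat[of y 1] by simp
lemma Phi_1[simp]: "Phi y 1 = 1" using Phi_of_nat[of y 1] by simp
lemma inA_0[simp]: "inA y 0" using inA_of_nat[of y 0] by simp
lemma Phi_0[simp]: "Phi y 0 = 0" using Phi_of_nat[of y 0] by simp

lemma ev_inj:
  assumes "\<And>k. k \<le> 8 \<Longrightarrow> inA z (y k) \<and> Phi z (y k) = gen k"
  shows "ev y b = 0 \<Longrightarrow> b = 0"
proof -
  have Q: "inA z (ev y r) \<and> Phi z (ev y r) = Fract r 1" for r
  proof (induction r rule: R_induct)
    case (1 p q) then show ?case by (simp add: ev_add)
  next
    case (2 p q) then show ?case by (simp add: ev_mult)
  next
    case (3 c) then show ?case using ev_const[of y c] ev_const[of z c] by (simp add: constC_def inA_Fract1 Phi_Fract1)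
  next
    case (4 k) then show ?case using assms[OF 4] by (simp add: ev_genR[OF 4] gen_def)
  qed
  assume "ev y b = 0"
  then have "Fract b 1 = 0" using Q[of b] by simp
  then show "b = 0" by (simp add: Zero_fract_def eq_fract)
qed

definition good :: "(nat \<Rightarrow> L) \<Rightarrow> bool" where
  "good y \<longleftrightarrow> (\<forall>b. ev y b = 0 \<longrightarrow> b = 0)"

lemma good_inA: "good y \<Longrightarrow> inA y q"
  unfolding good_def inA_def by (cases q) auto

lemma good_Phi_nz: "good y \<Longrightarrow> q \<noteq> 0 \<Longrightarrow> Phi y q \<noteq> 0"
proof (cases q)
  case (Fract a b)
  assume g: "good y" and q: "q \<noteq> 0"
  have "a \<noteq> 0" using Fract q by (metis eq_fract(3) Zero_fract_def)
  then have "ev y a \<noteq> 0" using g unfolding good_def by blast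
  moreover have "ev y b \<noteq> 0" using g Fract unfolding good_def by blast
  ultimately show ?thesis using Fract by (simp add: Phi_Fract)
qed

definition fhom :: "(L \<Rightarrow> L) \<Rightarrow> bool" where
  "fhom f \<longleftrightarrow> (\<forall>a b. f (a+b) = f a + f b) \<and> (\<forall>a b. f (a*b) = f a * f b) \<and> f 1 = 1 \<and>
     (\<forall>c. f (constC c) = constC c)"

lemma fhom_Phi: "good y \<Longrightarrow> fhom (Phi y)"
  unfolding fhom_def by (simp add: good_inA)

lemma fhom_0: "fhom f \<Longrightarrow> f 0 = 0"
  unfolding fhom_def by (metis add_cancel_right_right add_0)
lemma fhom_add: "fhom f \<Longrightarrow> f (a+b) = f a + f b" unfolding fhom_def by blast
lemma fhom_mult: "fhom f \<Longrightarrow> f (a*b) = f a * f b" unfolding fhom_def by blast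
lemma fhom_1: "fhom f \<Longrightarrow> f 1 = 1" unfolding fhom_def by blast
lemma fhom_constC: "fhom f \<Longrightarrow> f (constC c) = constC c" unfolding fhom_def by blast

lemma fhom_inverse: "fhom f \<Longrightarrow> f (inverse a) = inverse (f a)"
proof (cases "a = 0")
  case True assume "fhom f" then show ?thesis using True by (simp add: fhom_0)
next
  case False assume h: "fhom f"
  have "f a * f (inverse a) = 1" using False by (simp add: fhom_mult[OF h, symmetric] fhom_1[OF h])
  then show ?thesis by (metis inverse_unique)
qed

lemma fhom_div: "fhom f \<Longrightarrow> f (a / b) = f a / f b"
  by (simp add: divide_inverse fhom_mult fhom_inverse)

lemma fhom_nz: "fhom f \<Longrightarrow> a \<noteq> 0 \<Longrightarrow> f a \<noteq> 0"
  by (metis fhom_inverse fhom_mult fhom_1 right_inverse inverse_zero mult_zero_left zero_neq_one)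

lemma Fract_split: "b \<noteq> 0 \<Longrightarrow> Fract a b = Fract a 1 / Fract b 1"
  by simp

lemma fhom_ext:
  assumes f: "fhom f" and g: "fhom g" and gk: "\<And>k. k \<le> 8 \<Longrightarrow> f (gen k) = g (gen k)"
  shows "f = g"
proof
  have Q: "f (Fract r 1) = g (Fract r 1)" for r
  proof (induction r rule: R_induct)
    case (1 p q)
    have e: "Fract (p+q) 1 = Fract p 1 + Fract q 1" by simp
    show ?case unfolding e fhom_add[OF f] fhom_add[OF g] using 1 by simp
  next
    case (2 p q)
    have e: "Fract (p*q) 1 = Fract p 1 * Fract q 1" by simp
    show ?case unfolding e fhom_mult[OF f] fhom_mult[OF g] using 2 by simp
  next
    case (3 c) then show ?case using fhom_constC[OF f] fhom_constC[OF g] by (simp add: constC_def)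
  next
    case (4 k) then show ?case using gk by (simp add: gen_def)
  qed
  fix q show "f q = g q"
  proof (cases q)
    case (Fract a b)
    have e: "q = Fract a 1 / Fract b 1" using Fract by simp
    show ?thesis unfolding e fhom_div[OF f] fhom_div[OF g] using Q[of a] Q[of b] by simp
  qed
qed

definition fder :: "(L \<Rightarrow> L) \<Rightarrow> (L \<Rightarrow> L) \<Rightarrow> bool" where
  "fder f d \<longleftrightarrow> (\<forall>a b. d (a+b) = d a + d b) \<and> (\<forall>a b. d (a*b) = d a * f b + f a * d b) \<and>
     (\<forall>c. d (constC c) = 0)"

lemma fder_add: "fder f d \<Longrightarrow> d (a+b) = d a + d b" unfolding fder_def by blast
lemma fder_mult: "fder f d \<Longrightarrow> d (a*b) = d a * f b + f a * d b" unfolding fder_def by blast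

lemma fder_ext:
  assumes f: "fhom f" and d1: "fder f d1" and d2: "fder f d2"
    and gk: "\<And>k. k \<le> 8 \<Longrightarrow> d1 (gen k) = d2 (gen k)"
  shows "d1 = d2"
proof
  have Q: "d1 (Fract r 1) = d2 (Fract r 1)" for r
  proof (induction r rule: R_induct)
    case (1 p q)
    have e: "Fract (p+q) 1 = Fract p 1 + Fract q 1" by simp
    show ?case unfolding e fder_add[OF d1] fder_add[OF d2] using 1 by simp
  next
    case (2 p q)
    have e: "Fract (p*q) 1 = Fract p 1 * Fract q 1" by simp
    show ?case unfolding e fder_mult[OF d1] fder_mult[OF d2] using 2 by simp
  next
    case (3 c) then show ?case using d1 d2 unfolding fder_def by (simp add: constC_def)
  next
    case (4 k) then show ?case using gk by (simp add: gen_def)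
  qed
  fix q show "d1 q = d2 q"
  proof (cases q)
    case (Fract a b)
    let ?A = "Fract a 1" and ?B = "Fract b 1"
    have B: "?B \<noteq> 0" using Fract by (simp add: Zero_fract_def eq_fract)
    have AqB: "?A = q * ?B"
    proof -
      have "Fract a 1 = Fract (a * b) b" using Fract(2) eq_fract(1)[of 1 b a "a*b"] by simp
      then show ?thesis using Fract by simp
    qed
    have fB: "f ?B \<noteq> 0" using fhom_nz[OF f B] .
    have e1: "d1 ?A = d1 q * f ?B + f q * d1 ?B" using AqB d1 unfolding fder_def by metis
    have e2: "d2 ?A = d2 q * f ?B + f q * d2 ?B" using AqB d2 unfolding fder_def by metis
    have "d1 q * f ?B = d2 q * f ?B" using e1 e2 Q[of a] Q[of b] by (metis add_right_cancel)
    then show ?thesis using fB by (metis mult_cancel_right)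
  qed
qed

lemma Cder_0: "is_C_derivation D \<Longrightarrow> D 0 = 0"
  unfolding is_C_derivation_def by (metis add_cancel_right_right add_0)

lemma fder_fD: "fhom f \<Longrightarrow> is_C_derivation D \<Longrightarrow> fder f (f \<circ> D)"
  unfolding fder_def is_C_derivation_def by (simp add: fhom_add fhom_mult fhom_0)

lemma fder_Df: "fhom f \<Longrightarrow> is_C_derivation D \<Longrightarrow> fder f (D \<circ> f)"
  unfolding fder_def is_C_derivation_def by (simp add: fhom_add fhom_mult fhom_constC)

lemma commute_D:
  assumes f: "fhom f" and D: "is_C_derivation D" and gk: "\<And>k. k \<le> 8 \<Longrightarrow> f (D (gen k)) = D (f (gen k))"
  shows "f (D a) = D (f a)"
proof -
  have "f \<circ> D = D \<circ> f" by (rule fder_ext[OF f fder_fD[OF f D] fder_Df[OF f D]]) (simp add: gk)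
  then show ?thesis by (metis comp_apply)
qed

lemma fhom_comp: "fhom f \<Longrightarrow> fhom g \<Longrightarrow> fhom (f \<circ> g)"
  unfolding fhom_def by simp

lemma fhom_id: "fhom id" unfolding fhom_def by simp



lemma alpha_simps[simp]: "alpha 3 = alpha 0" "alpha 4 = alpha 1" "alpha 5 = alpha 2"
  unfolding alpha_def by simp_all
lemma tau_simps[simp]: "tau 3 = tau 0" "tau 4 = tau 1" "tau 5 = tau 2"
  unfolding tau_def by simp_all
lemma taup_simps[simp]: "taup 3 = taup 0" "taup 4 = taup 1" "taup 5 = taup 2"
  unfolding taup_def by simp_all
lemma F1_simps[simp]: "F1 3 = F1 0" "F1 4 = F1 1" "F1 5 = F1 2"
  unfolding F1_def by simp_all
lemma F2_simps[simp]: "F2 3 = F2 0" "F2 4 = F2 1" "F2 5 = F2 2"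
  unfolding F2_def F1_def tau_def taup_def alpha_def by simp_all
lemma phi_simps[simp]: "phi 3 = phi 0" "phi 4 = phi 1" "phi 5 = phi 2"
  unfolding phi_def F1_def tau_def taup_def by simp_all

lemma alpha_gen: "alpha 0 = gen 0" "alpha 1 = gen 1" "alpha 2 = 3 - gen 0 - gen 1"
  unfolding alpha_def by simp_all
lemma tau_gen: "tau 0 = gen 3" "tau 1 = gen 4" "tau 2 = gen 5"
  unfolding tau_def by simp_all
lemma taup_gen: "taup 0 = gen 6" "taup 1 = gen 7" "taup 2 = gen 8"
  unfolding taup_def by simp_all

lemma alpha2: "alpha 2 = 3 - alpha 0 - alpha 1" unfolding alpha_gen ..

lemma phi_F1: "phi j = F1 (j+1) - F1 (j+2) + xL"
  unfolding phi_def F1_def ..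

lemma nz_eval: "Phi z q \<noteq> 0 \<Longrightarrow> q \<noteq> 0"
  by auto

definition one9 :: "nat \<Rightarrow> L" where "one9 k = 1"

lemma Phi_one_tau: "j < 3 \<Longrightarrow> Phi one9 (tau j) = 1"
  unfolding tau_def one9_def by simp
lemma Phi_one_taup: "j < 3 \<Longrightarrow> Phi one9 (taup j) = 1"
  unfolding taup_def one9_def by simp

lemma tau_nz[simp]: "tau j \<noteq> 0"
proof -
  have "tau j = tau (j mod 3)" unfolding tau_def by simp
  moreover have "Phi one9 (tau (j mod 3)) = 1" by (rule Phi_one_tau) simp
  ultimately show ?thesis by auto
qed

lemma three_nz[simp]: "(3::L) \<noteq> 0"
proof -
  have e: "(3::L) = Fract (of_nat 3) 1" by (metis of_nat_fract of_nat_numeral)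
  have n: "(of_nat 3 :: R) \<noteq> 0" by (metis of_nat_eq_0_iff numeral_neq_zero of_nat_numeral)
  show ?thesis unfolding e Zero_fract_def using n by (simp add: eq_fract)
qed

lemma phi_nz[simp]: "phi j \<noteq> 0"
proof -
  have e: "phi j = taup (j+1) / tau (j+1) - taup (j+2) / tau (j+2) + xL" unfolding phi_def ..
  have t: "\<And>m. inA one9 (tau m) \<and> Phi one9 (tau m) = 1"
    by (simp add: tau_def one9_def)
  have tp: "\<And>m. inA one9 (taup m) \<and> Phi one9 (taup m) = 1"
    by (simp add: taup_def one9_def)
  have "Phi one9 (phi j) = 1" unfolding e using t tp by (simp add: xL_def one9_def)
  then show ?thesis by auto
qed

definition Y :: "nat \<Rightarrow> L" where "Y i = tau (i+1) * tau (i+2) * phi i / tau i"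
definition W :: "nat \<Rightarrow> L" where "W i = F1 i + alpha i / phi i"
definition dphi :: "nat \<Rightarrow> L" where "dphi i = alpha i + phi i * (2 * F1 i - F1 (i+1) - F1 (i+2))"

lemma Y_nz[simp]: "Y i \<noteq> 0" unfolding Y_def by simp

lemma alpha_Suc: "alpha (Suc 0) = alpha 1" "alpha (Suc (Suc 0)) = alpha 2"
  "alpha (Suc (Suc (Suc 0))) = alpha 0" "alpha (Suc (Suc (Suc (Suc 0)))) = alpha 1"
proof -
  show "alpha (Suc 0) = alpha 1" by (simp add: One_nat_def)
  show "alpha (Suc (Suc 0)) = alpha 2" by (simp add: numeral_2_eq_2)
  show "alpha (Suc (Suc (Suc 0))) = alpha 0" using alpha_simps(1) by (simp add: eval_nat_numeral)
  show "alpha (Suc (Suc (Suc (Suc 0)))) = alpha 1" using alpha_simps(2) by (simp add: eval_nat_numeral)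
qed

lemma tau_Suc: "tau (Suc 0) = tau 1" "tau (Suc (Suc 0)) = tau 2"
  "tau (Suc (Suc (Suc 0))) = tau 0" "tau (Suc (Suc (Suc (Suc 0)))) = tau 1"
proof -
  show "tau (Suc 0) = tau 1" by (simp add: One_nat_def)
  show "tau (Suc (Suc 0)) = tau 2" by (simp add: numeral_2_eq_2)
  show "tau (Suc (Suc (Suc 0))) = tau 0" using tau_simps(1) by (simp add: eval_nat_numeral)
  show "tau (Suc (Suc (Suc (Suc 0)))) = tau 1" using tau_simps(2) by (simp add: eval_nat_numeral)
qed

lemma taup_Suc: "taup (Suc 0) = taup 1" "taup (Suc (Suc 0)) = taup 2"
  "taup (Suc (Suc (Suc 0))) = taup 0" "taup (Suc (Suc (Suc (Suc 0)))) = taup 1"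
proof -
  show "taup (Suc 0) = taup 1" by (simp add: One_nat_def)
  show "taup (Suc (Suc 0)) = taup 2" by (simp add: numeral_2_eq_2)
  show "taup (Suc (Suc (Suc 0))) = taup 0" using taup_simps(1) by (simp add: eval_nat_numeral)
  show "taup (Suc (Suc (Suc (Suc 0)))) = taup 1" using taup_simps(2) by (simp add: eval_nat_numeral)
qed

lemma F1_Suc: "F1 (Suc 0) = F1 1" "F1 (Suc (Suc 0)) = F1 2"
  "F1 (Suc (Suc (Suc 0))) = F1 0" "F1 (Suc (Suc (Suc (Suc 0)))) = F1 1"
proof -
  show "F1 (Suc 0) = F1 1" by (simp add: One_nat_def)
  show "F1 (Suc (Suc 0)) = F1 2" by (simp add: numeral_2_eq_2)
  show "F1 (Suc (Suc (Suc 0))) = F1 0" using F1_simps(1) by (simp add: eval_nat_numeral)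
  show "F1 (Suc (Suc (Suc (Suc 0)))) = F1 1" using F1_simps(2) by (simp add: eval_nat_numeral)
qed

lemma F2_Suc: "F2 (Suc 0) = F2 1" "F2 (Suc (Suc 0)) = F2 2"
  "F2 (Suc (Suc (Suc 0))) = F2 0" "F2 (Suc (Suc (Suc (Suc 0)))) = F2 1"
proof -
  show "F2 (Suc 0) = F2 1" by (simp add: One_nat_def)
  show "F2 (Suc (Suc 0)) = F2 2" by (simp add: numeral_2_eq_2)
  show "F2 (Suc (Suc (Suc 0))) = F2 0" using F2_simps(1) by (simp add: eval_nat_numeral)
  show "F2 (Suc (Suc (Suc (Suc 0)))) = F2 1" using F2_simps(2) by (simp add: eval_nat_numeral)
qed

lemma phi_Suc: "phi (Suc 0) = phi 1" "phi (Suc (Suc 0)) = phi 2"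
  "phi (Suc (Suc (Suc 0))) = phi 0" "phi (Suc (Suc (Suc (Suc 0)))) = phi 1"
proof -
  show "phi (Suc 0) = phi 1" by (simp add: One_nat_def)
  show "phi (Suc (Suc 0)) = phi 2" by (simp add: numeral_2_eq_2)
  show "phi (Suc (Suc (Suc 0))) = phi 0" using phi_simps(1) by (simp add: eval_nat_numeral)
  show "phi (Suc (Suc (Suc (Suc 0)))) = phi 1" using phi_simps(2) by (simp add: eval_nat_numeral)
qed

lemma nat_ar: "(0::nat)+1 = 1" "(0::nat)+2=2" "(1::nat)+1=2" "(1::nat)+2=3" "(2::nat)+1=3" "(2::nat)+2=4"
  by simp_all

lemma F2_expand:
  "F2 0 = - xL * (F1 1 - F1 2) - (F1 0 - F1 1) * (F1 0 - F1 2) - (alpha 1 - alpha 2) / 3"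
  "F2 1 = - xL * (F1 2 - F1 0) - (F1 1 - F1 2) * (F1 1 - F1 0) - (alpha 2 - alpha 0) / 3"
  "F2 2 = - xL * (F1 0 - F1 1) - (F1 2 - F1 0) * (F1 2 - F1 1) - (alpha 0 - alpha 1) / 3"
  unfolding F2_def by (simp_all only: nat_ar F1_simps alpha_simps)

lemma phi_expand: "phi 0 = F1 1 - F1 2 + xL" "phi 1 = F1 2 - F1 0 + xL" "phi 2 = F1 0 - F1 1 + xL"
  unfolding phi_F1 by (simp_all only: nat_ar F1_simps)

lemma dphi_expand:
  "dphi 0 = alpha 0 + phi 0 * (2 * F1 0 - F1 1 - F1 2)"
  "dphi 1 = alpha 1 + phi 1 * (2 * F1 1 - F1 2 - F1 0)"
  "dphi 2 = alpha 2 + phi 2 * (2 * F1 2 - F1 0 - F1 1)"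
  unfolding dphi_def by (simp_all only: nat_ar F1_simps)

lemma Y_expand: "Y 0 = tau 1 * tau 2 * phi 0 / tau 0" "Y 1 = tau 2 * tau 0 * phi 1 / tau 1"
  "Y 2 = tau 0 * tau 1 * phi 2 / tau 2"
  unfolding Y_def by (simp_all only: nat_ar tau_simps)



declare One_nat_def [simp del]

lemma numeral_nz_L[simp]: "(numeral n :: L) \<noteq> 0"
proof -
  have e: "(numeral n::L) = Fract (of_nat (numeral n)) 1" by (metis of_nat_fract of_nat_numeral)
  have n: "(of_nat (numeral n) :: R) \<noteq> 0" by (metis of_nat_eq_0_iff numeral_neq_zero)
  show ?thesis unfolding e Zero_fract_def using n by (simp add: eq_fract)
qed

lemma dphi_id: "F2 1 - F2 2 + 1 = dphi 0" "F2 2 - F2 0 + 1 = dphi 1" "F2 0 - F2 1 + 1 = dphi 2"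
  unfolding F2_expand dphi_expand phi_expand alpha2 by (simp_all add: field_simps)

context
  fixes D :: "L \<Rightarrow> L"
  assumes pd: "is_prime_derivation D"
begin

lemma Cd: "is_C_derivation D" using pd unfolding is_prime_derivation_def by blast

lemma D_add: "D (a + b) = D a + D b" using Cd unfolding is_C_derivation_def by blast
lemma D_mult: "D (a * b) = D a * b + a * D b" using Cd unfolding is_C_derivation_def by blast
lemma D_constC: "D (constC c) = 0" using Cd unfolding is_C_derivation_def by blast
lemma D_0: "D 0 = 0" using Cder_0[OF Cd] .
lemma D_1: "D 1 = 0"
proof -
  have "D 1 = D 1 + D 1" using D_mult[of 1 1] by (simp only: mult_1_left mult_1_right)
  then show ?thesis using add_cancel_right_right by metis
qed
lemma D_uminus: "D (- a) = - D a"
proof -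
  have "D (- a) + D a = 0" using D_add[of "-a" a] D_0 by simp
  then show ?thesis by (simp add: eq_neg_iff_add_eq_0)
qed
lemma D_diff: "D (a - b) = D a - D b"
  using D_add[of a "-b"] D_uminus[of b] by simp
lemma D_of_nat: "D (of_nat n) = 0"
  by (induction n) (simp_all add: D_0 D_add D_1)
lemma D_numeral: "D (numeral n) = 0"
  using D_of_nat[of "numeral n"] by simp
lemma D_div: "b \<noteq> 0 \<Longrightarrow> D (a / b) = (D a * b - a * D b) / b^2"
proof -
  assume b: "b \<noteq> 0"
  have "D a = D ((a / b) * b)" using b by simp
  also have "\<dots> = D (a / b) * b + (a / b) * D b" by (rule D_mult)
  finally show ?thesis using b by (simp add: field_simps power2_eq_square)
qed
lemma D_pow2: "D (a^2) = 2 * a * D a"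
  using D_mult[of a a] by (simp add: power2_eq_square)

lemma D_alpha: "D (alpha i) = 0" using pd unfolding is_prime_derivation_def by (simp add: is_prime_derivation_def)
lemma D_x: "D xL = 1" using pd unfolding is_prime_derivation_def by (simp add: is_prime_derivation_def)
lemma D_tau: "D (tau i) = taup i" using pd unfolding is_prime_derivation_def by (simp add: is_prime_derivation_def)
lemma D_taup: "D (taup i) = tau i * (F2 i + (F1 i)^2)" using pd unfolding is_prime_derivation_def by (simp add: is_prime_derivation_def)

lemma D_F1: "D (F1 j) = F2 j"
proof -
  have t: "tau j \<noteq> 0" by simp
  have "D (F1 j) = (D (taup j) * tau j - taup j * D (tau j)) / (tau j)^2"
    unfolding F1_def by (rule D_div[OF t])
  also have "\<dots> = (tau j * (F2 j + (taup j / tau j)^2) * tau j - taup j * taup j) / (tau j)^2"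
    by (simp add: D_taup D_tau F1_def)
  also have "\<dots> = F2 j" using t by (simp add: field_simps power2_eq_square)
  finally show ?thesis .
qed

lemma D_phi0: "D (phi 0) = F2 1 - F2 2 + 1" "D (phi 1) = F2 2 - F2 0 + 1" "D (phi 2) = F2 0 - F2 1 + 1"
  unfolding phi_expand by (simp_all add: D_add D_diff D_F1 D_x)

lemma D_phi: "D (phi 0) = dphi 0" "D (phi 1) = dphi 1" "D (phi 2) = dphi 2"
  using D_phi0 dphi_id by simp_all

end



declare One_nat_def [simp del]

definition sa :: "nat \<Rightarrow> nat \<Rightarrow> L" where
  "sa i j = (if j = i then - alpha i else alpha j + alpha i)"

definition ys :: "nat \<Rightarrow> nat \<Rightarrow> L" where
  "ys i k = (if k = 0 then sa i 0 else if k = 1 then sa i 1 else if k = 2 then xL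
     else if k = 3 + i then Y i else if k = 6 + i then Y i * W i else gen k)"

lemma inA_alpha[simp]: "inA y (alpha j)" unfolding alpha_def by simp
lemma inA_tau[simp]: "inA y (tau j)" unfolding tau_def by simp
lemma inA_taup[simp]: "inA y (taup j)" unfolding taup_def by simp
lemma tauF1_gen: "gen 3 * F1 0 = gen 6" "gen 4 * F1 1 = gen 7" "gen 5 * F1 2 = gen 8"
  unfolding F1_def using tau_nz[of 0] tau_nz[of 1] tau_nz[of 2] by (simp_all add: tau_gen taup_gen)

lemma inA_xL[simp]: "inA y xL" unfolding xL_def by simp

lemma s0_gen: "Phi (ys 0) (gen 0) = sa 0 0" "Phi (ys 0) (gen 1) = sa 0 1" "Phi (ys 0) (gen 2) = xL"
  "Phi (ys 0) (gen 3) = Y 0" "Phi (ys 0) (gen 4) = tau 1" "Phi (ys 0) (gen 5) = tau 2"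
  "Phi (ys 0) (gen 6) = Y 0 * W 0" "Phi (ys 0) (gen 7) = taup 1" "Phi (ys 0) (gen 8) = taup 2"
  by (simp_all add: ys_def tau_gen taup_gen)

lemma s0_tau: "Phi (ys 0) (tau 0) = Y 0" "Phi (ys 0) (tau 1) = tau 1" "Phi (ys 0) (tau 2) = tau 2"
  unfolding tau_gen s0_gen by (simp_all add: tau_gen)

lemma s0_taup: "Phi (ys 0) (taup 0) = Y 0 * W 0" "Phi (ys 0) (taup 1) = taup 1" "Phi (ys 0) (taup 2) = taup 2"
  unfolding taup_gen s0_gen by (simp_all add: taup_gen)

lemma s0_x: "Phi (ys 0) xL = xL"
  unfolding xL_def s0_gen by (simp add: xL_def)

lemma s0_alpha: "Phi (ys 0) (alpha 0) = - alpha 0" "Phi (ys 0) (alpha 1) = alpha 1 + alpha 0" "Phi (ys 0) (alpha 2) = alpha 2 + alpha 0"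
proof -
  show "Phi (ys 0) (alpha 0) = - alpha 0" unfolding alpha_gen(1) s0_gen by (simp add: sa_def alpha_gen)
  show "Phi (ys 0) (alpha 1) = alpha 1 + alpha 0" unfolding alpha_gen(2) s0_gen by (simp add: sa_def alpha_gen)
  show "Phi (ys 0) (alpha 2) = alpha 2 + alpha 0" unfolding alpha_gen(3)
    by (simp add: s0_gen sa_def alpha_gen algebra_simps)
qed

lemma s0_F1: "Phi (ys 0) (F1 0) = W 0" "Phi (ys 0) (F1 1) = F1 1" "Phi (ys 0) (F1 2) = F1 2"
  and s0_F1_inA: "inA (ys 0) (F1 0)" "inA (ys 0) (F1 1)" "inA (ys 0) (F1 2)"
  unfolding F1_def by (simp_all add: s0_tau s0_taup)

lemma s0_phi: "Phi (ys 0) (phi 0) = phi 0" "Phi (ys 0) (phi 1) = phi 1 - alpha 0 / phi 0" "Phi (ys 0) (phi 2) = phi 2 + alpha 0 / phi 0"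
  and s0_phi_inA: "inA (ys 0) (phi 0)" "inA (ys 0) (phi 1)" "inA (ys 0) (phi 2)"
  unfolding phi_expand by (simp_all add: s0_F1 s0_F1_inA s0_x W_def phi_expand)

lemma s0_Y: "Phi (ys 0) (Y 0) = tau 0" and s0_Y_inA: "inA (ys 0) (Y 0)"
proof -
  have n: "phi 0 \<noteq> 0" "Y 0 \<noteq> 0" by simp_all
  show "inA (ys 0) (Y 0)" unfolding Y_expand by (simp add: s0_tau s0_phi s0_phi_inA)
  show "Phi (ys 0) (Y 0) = tau 0" unfolding Y_expand(1)
    by (simp add: s0_tau s0_phi s0_phi_inA)  (simp add: Y_expand field_simps)
qed

lemma s0_W: "Phi (ys 0) (W 0) = F1 0" and s0_W_inA: "inA (ys 0) (W 0)"
  unfolding W_def by (simp_all add: s0_F1 s0_F1_inA s0_phi s0_phi_inA s0_alpha W_def)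

lemma s0_inv: "k \<le> 8 \<Longrightarrow> inA (ys 0) (ys 0 k) \<and> Phi (ys 0) (ys 0 k) = gen k"
proof -
  assume "k \<le> 8"
  then have "k \<in> {0,1,2,3,4,5,6,7,8}" by auto
  then show ?thesis
    by (auto simp: ys_def sa_def s0_alpha s0_Y s0_Y_inA s0_W s0_W_inA s0_x s0_tau s0_taup
       alpha_gen tau_gen taup_gen xL_def tauF1_gen)
qed

lemma good_s0: "good (ys 0)"
  unfolding good_def using ev_inj[OF s0_inv] by blast

lemma s1_gen: "Phi (ys 1) (gen 0) = sa 1 0" "Phi (ys 1) (gen 1) = sa 1 1" "Phi (ys 1) (gen 2) = xL"
  "Phi (ys 1) (gen 3) = tau 0" "Phi (ys 1) (gen 4) = Y 1" "Phi (ys 1) (gen 5) = tau 2"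
  "Phi (ys 1) (gen 6) = taup 0" "Phi (ys 1) (gen 7) = Y 1 * W 1" "Phi (ys 1) (gen 8) = taup 2"
  by (simp_all add: ys_def tau_gen taup_gen)

lemma s1_tau: "Phi (ys 1) (tau 0) = tau 0" "Phi (ys 1) (tau 1) = Y 1" "Phi (ys 1) (tau 2) = tau 2"
  unfolding tau_gen s1_gen by (simp_all add: tau_gen)

lemma s1_taup: "Phi (ys 1) (taup 0) = taup 0" "Phi (ys 1) (taup 1) = Y 1 * W 1" "Phi (ys 1) (taup 2) = taup 2"
  unfolding taup_gen s1_gen by (simp_all add: taup_gen)

lemma s1_x: "Phi (ys 1) xL = xL"
  unfolding xL_def s1_gen by (simp add: xL_def)

lemma s1_alpha: "Phi (ys 1) (alpha 0) = alpha 0 + alpha 1" "Phi (ys 1) (alpha 1) = - alpha 1" "Phi (ys 1) (alpha 2) = alpha 2 + alpha 1"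
proof -
  show "Phi (ys 1) (alpha 0) = alpha 0 + alpha 1" unfolding alpha_gen(1) s1_gen by (simp add: sa_def alpha_gen)
  show "Phi (ys 1) (alpha 1) = - alpha 1" unfolding alpha_gen(2) s1_gen by (simp add: sa_def alpha_gen)
  show "Phi (ys 1) (alpha 2) = alpha 2 + alpha 1" unfolding alpha_gen(3)
    by (simp add: s1_gen sa_def alpha_gen algebra_simps)
qed

lemma s1_F1: "Phi (ys 1) (F1 0) = F1 0" "Phi (ys 1) (F1 1) = W 1" "Phi (ys 1) (F1 2) = F1 2"
  and s1_F1_inA: "inA (ys 1) (F1 0)" "inA (ys 1) (F1 1)" "inA (ys 1) (F1 2)"
  unfolding F1_def by (simp_all add: s1_tau s1_taup)

lemma s1_phi: "Phi (ys 1) (phi 0) = phi 0 + alpha 1 / phi 1" "Phi (ys 1) (phi 1) = phi 1" "Phi (ys 1) (phi 2) = phi 2 - alpha 1 / phi 1"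
  and s1_phi_inA: "inA (ys 1) (phi 0)" "inA (ys 1) (phi 1)" "inA (ys 1) (phi 2)"
  unfolding phi_expand by (simp_all add: s1_F1 s1_F1_inA s1_x W_def phi_expand)

lemma s1_Y: "Phi (ys 1) (Y 1) = tau 1" and s1_Y_inA: "inA (ys 1) (Y 1)"
proof -
  have n: "phi 1 \<noteq> 0" "Y 1 \<noteq> 0" by simp_all
  show "inA (ys 1) (Y 1)" unfolding Y_expand by (simp add: s1_tau s1_phi s1_phi_inA)
  show "Phi (ys 1) (Y 1) = tau 1" unfolding Y_expand(2)
    by (simp add: s1_tau s1_phi s1_phi_inA)  (simp add: Y_expand field_simps)
qed

lemma s1_W: "Phi (ys 1) (W 1) = F1 1" and s1_W_inA: "inA (ys 1) (W 1)"
  unfolding W_def by (simp_all add: s1_F1 s1_F1_inA s1_phi s1_phi_inA s1_alpha W_def)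

lemma s1_inv: "k \<le> 8 \<Longrightarrow> inA (ys 1) (ys 1 k) \<and> Phi (ys 1) (ys 1 k) = gen k"
proof -
  assume "k \<le> 8"
  then have "k \<in> {0,1,2,3,4,5,6,7,8}" by auto
  then show ?thesis
    by (auto simp: ys_def sa_def s1_alpha s1_Y s1_Y_inA s1_W s1_W_inA s1_x s1_tau s1_taup
       alpha_gen tau_gen taup_gen xL_def tauF1_gen)
qed

lemma good_s1: "good (ys 1)"
  unfolding good_def using ev_inj[OF s1_inv] by blast

lemma s2_gen: "Phi (ys 2) (gen 0) = sa 2 0" "Phi (ys 2) (gen 1) = sa 2 1" "Phi (ys 2) (gen 2) = xL"
  "Phi (ys 2) (gen 3) = tau 0" "Phi (ys 2) (gen 4) = tau 1" "Phi (ys 2) (gen 5) = Y 2"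
  "Phi (ys 2) (gen 6) = taup 0" "Phi (ys 2) (gen 7) = taup 1" "Phi (ys 2) (gen 8) = Y 2 * W 2"
  by (simp_all add: ys_def tau_gen taup_gen)

lemma s2_tau: "Phi (ys 2) (tau 0) = tau 0" "Phi (ys 2) (tau 1) = tau 1" "Phi (ys 2) (tau 2) = Y 2"
  unfolding tau_gen s2_gen by (simp_all add: tau_gen)

lemma s2_taup: "Phi (ys 2) (taup 0) = taup 0" "Phi (ys 2) (taup 1) = taup 1" "Phi (ys 2) (taup 2) = Y 2 * W 2"
  unfolding taup_gen s2_gen by (simp_all add: taup_gen)

lemma s2_x: "Phi (ys 2) xL = xL"
  unfolding xL_def s2_gen by (simp add: xL_def)

lemma s2_alpha: "Phi (ys 2) (alpha 0) = alpha 0 + alpha 2" "Phi (ys 2) (alpha 1) = alpha 1 + alpha 2" "Phi (ys 2) (alpha 2) = - alpha 2"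
proof -
  show "Phi (ys 2) (alpha 0) = alpha 0 + alpha 2" unfolding alpha_gen(1) s2_gen by (simp add: sa_def alpha_gen)
  show "Phi (ys 2) (alpha 1) = alpha 1 + alpha 2" unfolding alpha_gen(2) s2_gen by (simp add: sa_def alpha_gen)
  show "Phi (ys 2) (alpha 2) = - alpha 2" unfolding alpha_gen(3)
    by (simp add: s2_gen sa_def alpha_gen algebra_simps)
qed

lemma s2_F1: "Phi (ys 2) (F1 0) = F1 0" "Phi (ys 2) (F1 1) = F1 1" "Phi (ys 2) (F1 2) = W 2"
  and s2_F1_inA: "inA (ys 2) (F1 0)" "inA (ys 2) (F1 1)" "inA (ys 2) (F1 2)"
  unfolding F1_def by (simp_all add: s2_tau s2_taup)

lemma s2_phi: "Phi (ys 2) (phi 0) = phi 0 - alpha 2 / phi 2" "Phi (ys 2) (phi 1) = phi 1 + alpha 2 / phi 2" "Phi (ys 2) (phi 2) = phi 2"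
  and s2_phi_inA: "inA (ys 2) (phi 0)" "inA (ys 2) (phi 1)" "inA (ys 2) (phi 2)"
  unfolding phi_expand by (simp_all add: s2_F1 s2_F1_inA s2_x W_def phi_expand)

lemma s2_Y: "Phi (ys 2) (Y 2) = tau 2" and s2_Y_inA: "inA (ys 2) (Y 2)"
proof -
  have n: "phi 2 \<noteq> 0" "Y 2 \<noteq> 0" by simp_all
  show "inA (ys 2) (Y 2)" unfolding Y_expand by (simp add: s2_tau s2_phi s2_phi_inA)
  show "Phi (ys 2) (Y 2) = tau 2" unfolding Y_expand(3)
    by (simp add: s2_tau s2_phi s2_phi_inA)  (simp add: Y_expand field_simps)
qed

lemma s2_W: "Phi (ys 2) (W 2) = F1 2" and s2_W_inA: "inA (ys 2) (W 2)"
  unfolding W_def by (simp_all add: s2_F1 s2_F1_inA s2_phi s2_phi_inA s2_alpha W_def)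

lemma s2_inv: "k \<le> 8 \<Longrightarrow> inA (ys 2) (ys 2 k) \<and> Phi (ys 2) (ys 2 k) = gen k"
proof -
  assume "k \<le> 8"
  then have "k \<in> {0,1,2,3,4,5,6,7,8}" by auto
  then show ?thesis
    by (auto simp: ys_def sa_def s2_alpha s2_Y s2_Y_inA s2_W s2_W_inA s2_x s2_tau s2_taup
       alpha_gen tau_gen taup_gen xL_def tauF1_gen)
qed

lemma good_s2: "good (ys 2)"
  unfolding good_def using ev_inj[OF s2_inv] by blast



declare One_nat_def [simp del]

lemma taup_F1: "taup j = tau j * F1 j" unfolding F1_def by simp

lemma gen_names: "gen 0 = alpha 0" "gen 1 = alpha 1" "gen 2 = xL" "gen 3 = tau 0" "gen 4 = tau 1"
  "gen 5 = tau 2" "gen 6 = taup 0" "gen 7 = taup 1" "gen 8 = taup 2"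
  by (simp_all add: alpha_gen tau_gen taup_gen xL_def)

lemma Phi_pow2[simp]: "inA y q \<Longrightarrow> Phi y (q^2) = (Phi y q)^2"
  by (simp add: power2_eq_square)

lemma inA_all_s0: "inA (ys 0) q" using good_inA[OF good_s0] .

lemma F1_elim0: "F1 1 = phi 0 + F1 2 - xL" unfolding phi_expand by simp

lemma s0_F2: "Phi (ys 0) (F2 1) = F2 1" "Phi (ys 0) (F2 2) = F2 2"
  "Phi (ys 0) (F2 0) = F2 0 - alpha 0 * dphi 0 / (phi 0)^2"
proof -
  have nz: "phi 0 \<noteq> 0" by simp
  show "Phi (ys 0) (F2 1) = F2 1"
    apply (simp only: F2_expand)
    apply (simp add: inA_all_s0 s0_F1 s0_alpha s0_x)
    apply (simp only: W_def alpha2 F1_elim0)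
    using nz apply (simp add: field_simps power2_eq_square)
    done
  show "Phi (ys 0) (F2 2) = F2 2"
    apply (simp only: F2_expand)
    apply (simp add: inA_all_s0 s0_F1 s0_alpha s0_x)
    apply (simp only: W_def alpha2 F1_elim0)
    using nz apply (simp add: field_simps power2_eq_square)
    done
  show "Phi (ys 0) (F2 0) = F2 0 - alpha 0 * dphi 0 / (phi 0)^2"
    apply (simp only: F2_expand dphi_expand)
    apply (simp add: inA_all_s0 s0_F1 s0_alpha s0_x)
    apply (simp only: W_def alpha2 F1_elim0)
    using nz apply (simp add: field_simps power2_eq_square)
    done
qed

lemma s0_invol: "Phi (ys 0) \<circ> Phi (ys 0) = id"
  by (rule fhom_ext[OF fhom_comp[OF fhom_Phi[OF good_s0] fhom_Phi[OF good_s0]] fhom_id])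
     (simp add: Phi_gen s0_inv)

context
  fixes D :: "L \<Rightarrow> L"
  assumes pd: "is_prime_derivation D"
begin

lemma DY0: "D (Y 0) = Y 0 * W 0"
  unfolding Y_expand(1) W_def
  using tau_nz[of 0] phi_nz[of 0]
  apply (simp add: D_div[OF pd] D_mult[OF pd] D_tau[OF pd] D_phi[OF pd])
  apply ((simp add: dphi_expand taup_F1 field_simps power2_eq_square)?)
  done

lemma DW0: "D (W 0) = F2 0 - alpha 0 * dphi 0 / (phi 0)^2"
  unfolding W_def
  using phi_nz[of 0]
  apply (simp add: D_div[OF pd] D_add[OF pd] D_F1[OF pd] D_alpha[OF pd] D_phi[OF pd])
  apply ((simp add: field_simps power2_eq_square)?)
  done

lemma s0_D: "Phi (ys 0) (D a) = D (Phi (ys 0) a)"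
proof (rule commute_D[OF fhom_Phi[OF good_s0] Cd[OF pd]])
  fix k :: nat assume "k \<le> 8"
  then have "k \<in> {0,1,2,3,4,5,6,7,8}" by auto
  then show "Phi (ys 0) (D (gen k)) = D (Phi (ys 0) (gen k))"
    by (auto simp: gen_names s0_tau s0_taup s0_alpha s0_x s0_F1 s0_F2 inA_all_s0 Phi_pow2
       D_tau[OF pd] D_taup[OF pd] D_alpha[OF pd] D_x[OF pd] D_add[OF pd] D_uminus[OF pd] D_mult[OF pd]
       DY0 DW0 power2_eq_square algebra_simps)
qed

end

lemma inA_all_s1: "inA (ys 1) q" using good_inA[OF good_s1] .

lemma F1_elim1: "F1 2 = phi 1 + F1 0 - xL" unfolding phi_expand by simp

lemma s1_F2: "Phi (ys 1) (F2 2) = F2 2" "Phi (ys 1) (F2 0) = F2 0"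
  "Phi (ys 1) (F2 1) = F2 1 - alpha 1 * dphi 1 / (phi 1)^2"
proof -
  have nz: "phi 1 \<noteq> 0" by simp
  show "Phi (ys 1) (F2 2) = F2 2"
    apply (simp only: F2_expand)
    apply (simp add: inA_all_s1 s1_F1 s1_alpha s1_x)
    apply (simp only: W_def alpha2 F1_elim1)
    using nz apply (simp add: field_simps power2_eq_square)
    done
  show "Phi (ys 1) (F2 0) = F2 0"
    apply (simp only: F2_expand)
    apply (simp add: inA_all_s1 s1_F1 s1_alpha s1_x)
    apply (simp only: W_def alpha2 F1_elim1)
    using nz apply (simp add: field_simps power2_eq_square)
    done
  show "Phi (ys 1) (F2 1) = F2 1 - alpha 1 * dphi 1 / (phi 1)^2"
    apply (simp only: F2_expand dphi_expand)
    apply (simp add: inA_all_s1 s1_F1 s1_alpha s1_x)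
    apply (simp only: W_def alpha2 F1_elim1)
    using nz apply (simp add: field_simps power2_eq_square)
    done
qed

lemma s1_invol: "Phi (ys 1) \<circ> Phi (ys 1) = id"
  by (rule fhom_ext[OF fhom_comp[OF fhom_Phi[OF good_s1] fhom_Phi[OF good_s1]] fhom_id])
     (simp add: Phi_gen s1_inv)

context
  fixes D :: "L \<Rightarrow> L"
  assumes pd: "is_prime_derivation D"
begin

lemma DY1: "D (Y 1) = Y 1 * W 1"
  unfolding Y_expand(2) W_def
  using tau_nz[of 1] phi_nz[of 1]
  apply (simp add: D_div[OF pd] D_mult[OF pd] D_tau[OF pd] D_phi[OF pd])
  apply ((simp add: dphi_expand taup_F1 field_simps power2_eq_square)?)
  done

lemma DW1: "D (W 1) = F2 1 - alpha 1 * dphi 1 / (phi 1)^2"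
  unfolding W_def
  using phi_nz[of 1]
  apply (simp add: D_div[OF pd] D_add[OF pd] D_F1[OF pd] D_alpha[OF pd] D_phi[OF pd])
  apply ((simp add: field_simps power2_eq_square)?)
  done

lemma s1_D: "Phi (ys 1) (D a) = D (Phi (ys 1) a)"
proof (rule commute_D[OF fhom_Phi[OF good_s1] Cd[OF pd]])
  fix k :: nat assume "k \<le> 8"
  then have "k \<in> {0,1,2,3,4,5,6,7,8}" by auto
  then show "Phi (ys 1) (D (gen k)) = D (Phi (ys 1) (gen k))"
    by (auto simp: gen_names s1_tau s1_taup s1_alpha s1_x s1_F1 s1_F2 inA_all_s1 Phi_pow2
       D_tau[OF pd] D_taup[OF pd] D_alpha[OF pd] D_x[OF pd] D_add[OF pd] D_uminus[OF pd] D_mult[OF pd]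
       DY1 DW1 power2_eq_square algebra_simps)
qed

end

lemma inA_all_s2: "inA (ys 2) q" using good_inA[OF good_s2] .

lemma F1_elim2: "F1 0 = phi 2 + F1 1 - xL" unfolding phi_expand by simp

lemma s2_F2: "Phi (ys 2) (F2 0) = F2 0" "Phi (ys 2) (F2 1) = F2 1"
  "Phi (ys 2) (F2 2) = F2 2 - alpha 2 * dphi 2 / (phi 2)^2"
proof -
  have nz: "phi 2 \<noteq> 0" by simp
  show "Phi (ys 2) (F2 0) = F2 0"
    apply (simp only: F2_expand)
    apply (simp add: inA_all_s2 s2_F1 s2_alpha s2_x)
    apply (simp only: W_def alpha2 F1_elim2)
    using nz apply (simp add: field_simps power2_eq_square)
    done
  show "Phi (ys 2) (F2 1) = F2 1"
    apply (simp only: F2_expand)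
    apply (simp add: inA_all_s2 s2_F1 s2_alpha s2_x)
    apply (simp only: W_def alpha2 F1_elim2)
    using nz apply (simp add: field_simps power2_eq_square)
    done
  show "Phi (ys 2) (F2 2) = F2 2 - alpha 2 * dphi 2 / (phi 2)^2"
    apply (simp only: F2_expand dphi_expand)
    apply (simp add: inA_all_s2 s2_F1 s2_alpha s2_x)
    apply (simp only: W_def alpha2 F1_elim2)
    using nz apply (simp add: field_simps power2_eq_square)
    done
qed

lemma s2_invol: "Phi (ys 2) \<circ> Phi (ys 2) = id"
  by (rule fhom_ext[OF fhom_comp[OF fhom_Phi[OF good_s2] fhom_Phi[OF good_s2]] fhom_id])
     (simp add: Phi_gen s2_inv)

context
  fixes D :: "L \<Rightarrow> L"
  assumes pd: "is_prime_derivation D"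
begin

lemma DY2: "D (Y 2) = Y 2 * W 2"
  unfolding Y_expand(3) W_def
  using tau_nz[of 2] phi_nz[of 2]
  apply (simp add: D_div[OF pd] D_mult[OF pd] D_tau[OF pd] D_phi[OF pd])
  apply ((simp add: dphi_expand taup_F1 field_simps power2_eq_square)?)
  done

lemma DW2: "D (W 2) = F2 2 - alpha 2 * dphi 2 / (phi 2)^2"
  unfolding W_def
  using phi_nz[of 2]
  apply (simp add: D_div[OF pd] D_add[OF pd] D_F1[OF pd] D_alpha[OF pd] D_phi[OF pd])
  apply ((simp add: field_simps power2_eq_square)?)
  done

lemma s2_D: "Phi (ys 2) (D a) = D (Phi (ys 2) a)"
proof (rule commute_D[OF fhom_Phi[OF good_s2] Cd[OF pd]])
  fix k :: nat assume "k \<le> 8"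
  then have "k \<in> {0,1,2,3,4,5,6,7,8}" by auto
  then show "Phi (ys 2) (D (gen k)) = D (Phi (ys 2) (gen k))"
    by (auto simp: gen_names s2_tau s2_taup s2_alpha s2_x s2_F1 s2_F2 inA_all_s2 Phi_pow2
       D_tau[OF pd] D_taup[OF pd] D_alpha[OF pd] D_x[OF pd] D_add[OF pd] D_uminus[OF pd] D_mult[OF pd]
       DY2 DW2 power2_eq_square algebra_simps)
qed

end



declare One_nat_def [simp del]

definition yp :: "nat \<Rightarrow> L" where
  "yp k = (if k = 0 then gen 1 else if k = 1 then 3 - gen 0 - gen 1 else if k = 2 then xL
     else if k = 3 then tau 1 else if k = 4 then tau 2 else if k = 5 then tau 0
     else if k = 6 then taup 1 else if k = 7 then taup 2 else taup 0)"

definition ypi :: "nat \<Rightarrow> L" where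
  "ypi k = (if k = 0 then 3 - gen 0 - gen 1 else if k = 1 then gen 0 else if k = 2 then xL
     else if k = 3 then tau 2 else if k = 4 then tau 0 else if k = 5 then tau 1
     else if k = 6 then taup 2 else if k = 7 then taup 0 else taup 1)"

lemma p_gen: "Phi yp (gen 0) = gen 1" "Phi yp (gen 1) = 3 - gen 0 - gen 1" "Phi yp (gen 2) = xL"
  "Phi yp (gen 3) = tau 1" "Phi yp (gen 4) = tau 2" "Phi yp (gen 5) = tau 0"
  "Phi yp (gen 6) = taup 1" "Phi yp (gen 7) = taup 2" "Phi yp (gen 8) = taup 0"
  by (simp_all add: yp_def)

lemma pi_gen: "Phi ypi (gen 0) = 3 - gen 0 - gen 1" "Phi ypi (gen 1) = gen 0" "Phi ypi (gen 2) = xL"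
  "Phi ypi (gen 3) = tau 2" "Phi ypi (gen 4) = tau 0" "Phi ypi (gen 5) = tau 1"
  "Phi ypi (gen 6) = taup 2" "Phi ypi (gen 7) = taup 0" "Phi ypi (gen 8) = taup 1"
  by (simp_all add: ypi_def)

lemma p_inv: "k \<le> 8 \<Longrightarrow> inA ypi (yp k) \<and> Phi ypi (yp k) = gen k"
proof -
  assume "k \<le> 8"
  then have "k \<in> {0,1,2,3,4,5,6,7,8}" by auto
  then show ?thesis
    by (auto simp: yp_def pi_gen tau_gen taup_gen xL_def)
qed

lemma good_p: "good yp"
  unfolding good_def using ev_inj[OF p_inv] by blast

lemma inA_all_p: "inA yp q" using good_inA[OF good_p] .

lemma p_tau: "Phi yp (tau 0) = tau 1" "Phi yp (tau 1) = tau 2" "Phi yp (tau 2) = tau 0"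
  unfolding tau_gen p_gen by (simp_all add: tau_gen)
lemma p_taup: "Phi yp (taup 0) = taup 1" "Phi yp (taup 1) = taup 2" "Phi yp (taup 2) = taup 0"
  unfolding taup_gen p_gen by (simp_all add: taup_gen)
lemma p_x: "Phi yp xL = xL"
  unfolding xL_def p_gen by (simp add: xL_def)
lemma p_alpha: "Phi yp (alpha 0) = alpha 1" "Phi yp (alpha 1) = alpha 2" "Phi yp (alpha 2) = alpha 0"
  unfolding alpha_gen by (simp_all add: p_gen inA_all_p)
lemma p_F1: "Phi yp (F1 0) = F1 1" "Phi yp (F1 1) = F1 2" "Phi yp (F1 2) = F1 0"
  unfolding F1_def by (simp_all add: p_tau p_taup inA_all_p)
lemma p_phi: "Phi yp (phi 0) = phi 1" "Phi yp (phi 1) = phi 2" "Phi yp (phi 2) = phi 0"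
  unfolding phi_expand by (simp_all add: p_F1 p_x inA_all_p)
lemma p_F2: "Phi yp (F2 0) = F2 1" "Phi yp (F2 1) = F2 2" "Phi yp (F2 2) = F2 0"
  unfolding F2_expand by (simp_all add: p_F1 p_x p_alpha inA_all_p)
lemma p_Y: "Phi yp (Y 0) = Y 1" "Phi yp (Y 1) = Y 2" "Phi yp (Y 2) = Y 0"
  unfolding Y_expand by (simp_all add: p_tau p_phi inA_all_p)
lemma p_W: "Phi yp (W 0) = W 1" "Phi yp (W 1) = W 2" "Phi yp (W 2) = W 0"
  unfolding W_def by (simp_all add: p_F1 p_phi p_alpha inA_all_p)

lemma gen_names': "gen 0 = alpha 0" "gen 1 = alpha 1" "gen 2 = xL" "gen 3 = tau 0" "gen 4 = tau 1"
  "gen 5 = tau 2" "gen 6 = taup 0" "gen 7 = taup 1" "gen 8 = taup 2"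
  by (simp_all add: alpha_gen tau_gen taup_gen xL_def)

lemma p3: "Phi yp \<circ> Phi yp \<circ> Phi yp = id"
proof (rule fhom_ext[OF fhom_comp[OF fhom_comp[OF fhom_Phi[OF good_p] fhom_Phi[OF good_p]] fhom_Phi[OF good_p]] fhom_id])
  fix k :: nat assume "k \<le> 8"
  then have "k \<in> {0,1,2,3,4,5,6,7,8}" by auto
  then show "(Phi yp \<circ> Phi yp \<circ> Phi yp) (gen k) = id (gen k)"
    by (auto simp: gen_names' p_tau p_taup p_x p_alpha)
qed

context
  fixes D :: "L \<Rightarrow> L"
  assumes pd: "is_prime_derivation D"
begin

lemma p_D: "Phi yp (D a) = D (Phi yp a)"
proof (rule commute_D[OF fhom_Phi[OF good_p] Cd[OF pd]])
  fix k :: nat assume "k \<le> 8"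
  then have "k \<in> {0,1,2,3,4,5,6,7,8}" by auto
  then show "Phi yp (D (gen k)) = D (Phi yp (gen k))"
    by (auto simp: gen_names' p_tau p_taup p_alpha p_x p_F1 p_F2 inA_all_p power2_eq_square
       D_tau[OF pd] D_taup[OF pd] D_alpha[OF pd] D_x[OF pd])
qed

end



declare One_nat_def [simp del]

context
  fixes D :: "L \<Rightarrow> L"
  assumes pd: "is_prime_derivation D"
begin

lemma ext_D:
  assumes pd: "is_prime_derivation D" and f: "fhom f" and g: "fhom g"
    and fD: "\<And>a. f (D a) = D (f a)" and gD: "\<And>a. g (D a) = D (g a)"
    and gk: "\<And>k. k \<le> 5 \<Longrightarrow> f (gen k) = g (gen k)"
  shows "f = g"
proof (rule fhom_ext[OF f g])
  fix k :: nat assume k: "k \<le> 8"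
  show "f (gen k) = g (gen k)"
  proof (cases "k \<le> 5")
    case True then show ?thesis by (rule gk)
  next
    case False
    then have "k \<in> {6,7,8}" using k by auto
    moreover have "gen 6 = D (gen 3)" "gen 7 = D (gen 4)" "gen 8 = D (gen 5)"
      by (simp_all add: gen_names' D_tau[OF pd])
    ultimately show ?thesis using fD gD gk[of 3] gk[of 4] gk[of 5] by auto
  qed
qed

lemma ps0: "Phi yp \<circ> Phi (ys 0) = Phi (ys 1) \<circ> Phi yp"
proof (rule ext_D[OF pd fhom_comp[OF fhom_Phi[OF good_p] fhom_Phi[OF good_s0]]
    fhom_comp[OF fhom_Phi[OF good_s1] fhom_Phi[OF good_p]]])
  show "\<And>a. (Phi yp \<circ> Phi (ys 0)) (D a) = D ((Phi yp \<circ> Phi (ys 0)) a)"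
    by (simp add: p_D[OF pd] s0_D[OF pd])
  show "\<And>a. (Phi (ys 1) \<circ> Phi yp) (D a) = D ((Phi (ys 1) \<circ> Phi yp) a)"
    by (simp add: p_D[OF pd] s1_D[OF pd])
  fix k :: nat assume "k \<le> 5"
  then have "k \<in> {0,1,2,3,4,5}" by auto
  then show "(Phi yp \<circ> Phi (ys 0)) (gen k) = (Phi (ys 1) \<circ> Phi yp) (gen k)"
    by (auto simp: gen_names' s0_tau s0_taup s0_alpha s0_x s0_phi inA_all_s0 s1_tau s1_taup s1_alpha s1_x s1_phi inA_all_s1 p_tau p_alpha p_x p_Y inA_all_p)
qed

lemma braid0: "Phi (ys 0) \<circ> Phi (ys 1) \<circ> Phi (ys 0) = Phi (ys 1) \<circ> Phi (ys 0) \<circ> Phi (ys 1)"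
proof (rule ext_D[OF pd fhom_comp[OF fhom_comp[OF fhom_Phi[OF good_s0] fhom_Phi[OF good_s1]] fhom_Phi[OF good_s0]]
    fhom_comp[OF fhom_comp[OF fhom_Phi[OF good_s1] fhom_Phi[OF good_s0]] fhom_Phi[OF good_s1]]])
  show "\<And>a. (Phi (ys 0) \<circ> Phi (ys 1) \<circ> Phi (ys 0)) (D a) = D ((Phi (ys 0) \<circ> Phi (ys 1) \<circ> Phi (ys 0)) a)"
    by (simp add: s0_D[OF pd] s1_D[OF pd])
  show "\<And>a. (Phi (ys 1) \<circ> Phi (ys 0) \<circ> Phi (ys 1)) (D a) = D ((Phi (ys 1) \<circ> Phi (ys 0) \<circ> Phi (ys 1)) a)"
    by (simp add: s0_D[OF pd] s1_D[OF pd])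
  have nzA: "phi 1 - alpha 0 / phi 0 \<noteq> 0"
    using fhom_nz[OF fhom_Phi[OF good_s0] phi_nz[of 1]] by (simp add: s0_phi)
  have nzB: "phi 0 + alpha 1 / phi 1 \<noteq> 0"
    using fhom_nz[OF fhom_Phi[OF good_s1] phi_nz[of 0]] by (simp add: s1_phi)
  have nzA': "phi 1 * phi 0 - alpha 0 \<noteq> 0" using nzA by (simp add: field_simps)
  have nzB': "phi 0 * phi 1 + alpha 1 \<noteq> 0" using nzB by (simp add: field_simps)
  fix k :: nat assume "k \<le> 5"
  then have "k \<in> {0,1,2,3,4,5}" by auto
  then show "(Phi (ys 0) \<circ> Phi (ys 1) \<circ> Phi (ys 0)) (gen k) = (Phi (ys 1) \<circ> Phi (ys 0) \<circ> Phi (ys 1)) (gen k)"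
    apply (elim insertE)
    apply (simp_all add: gen_names' s0_tau s0_taup s0_alpha s0_x s0_phi inA_all_s0 s1_tau s1_taup s1_alpha s1_x s1_phi inA_all_s1 Y_expand algebra_simps)
    using nzA nzB nzA' nzB' by (simp_all add: field_simps)
qed

lemma ps1: "Phi yp \<circ> Phi (ys 1) = Phi (ys 2) \<circ> Phi yp"
proof (rule ext_D[OF pd fhom_comp[OF fhom_Phi[OF good_p] fhom_Phi[OF good_s1]]
    fhom_comp[OF fhom_Phi[OF good_s2] fhom_Phi[OF good_p]]])
  show "\<And>a. (Phi yp \<circ> Phi (ys 1)) (D a) = D ((Phi yp \<circ> Phi (ys 1)) a)"
    by (simp add: p_D[OF pd] s1_D[OF pd])
  show "\<And>a. (Phi (ys 2) \<circ> Phi yp) (D a) = D ((Phi (ys 2) \<circ> Phi yp) a)"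
    by (simp add: p_D[OF pd] s2_D[OF pd])
  fix k :: nat assume "k \<le> 5"
  then have "k \<in> {0,1,2,3,4,5}" by auto
  then show "(Phi yp \<circ> Phi (ys 1)) (gen k) = (Phi (ys 2) \<circ> Phi yp) (gen k)"
    by (auto simp: gen_names' s1_tau s1_taup s1_alpha s1_x s1_phi inA_all_s1 s2_tau s2_taup s2_alpha s2_x s2_phi inA_all_s2 p_tau p_alpha p_x p_Y inA_all_p)
qed

lemma braid1: "Phi (ys 1) \<circ> Phi (ys 2) \<circ> Phi (ys 1) = Phi (ys 2) \<circ> Phi (ys 1) \<circ> Phi (ys 2)"
proof (rule ext_D[OF pd fhom_comp[OF fhom_comp[OF fhom_Phi[OF good_s1] fhom_Phi[OF good_s2]] fhom_Phi[OF good_s1]]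
    fhom_comp[OF fhom_comp[OF fhom_Phi[OF good_s2] fhom_Phi[OF good_s1]] fhom_Phi[OF good_s2]]])
  show "\<And>a. (Phi (ys 1) \<circ> Phi (ys 2) \<circ> Phi (ys 1)) (D a) = D ((Phi (ys 1) \<circ> Phi (ys 2) \<circ> Phi (ys 1)) a)"
    by (simp add: s1_D[OF pd] s2_D[OF pd])
  show "\<And>a. (Phi (ys 2) \<circ> Phi (ys 1) \<circ> Phi (ys 2)) (D a) = D ((Phi (ys 2) \<circ> Phi (ys 1) \<circ> Phi (ys 2)) a)"
    by (simp add: s1_D[OF pd] s2_D[OF pd])
  have nzA: "phi 2 - alpha 1 / phi 1 \<noteq> 0"
    using fhom_nz[OF fhom_Phi[OF good_s1] phi_nz[of 2]] by (simp add: s1_phi)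
  have nzB: "phi 1 + alpha 2 / phi 2 \<noteq> 0"
    using fhom_nz[OF fhom_Phi[OF good_s2] phi_nz[of 1]] by (simp add: s2_phi)
  have nzA': "phi 2 * phi 1 - alpha 1 \<noteq> 0" using nzA by (simp add: field_simps)
  have nzB': "phi 1 * phi 2 + alpha 2 \<noteq> 0" using nzB by (simp add: field_simps)
  fix k :: nat assume "k \<le> 5"
  then have "k \<in> {0,1,2,3,4,5}" by auto
  then show "(Phi (ys 1) \<circ> Phi (ys 2) \<circ> Phi (ys 1)) (gen k) = (Phi (ys 2) \<circ> Phi (ys 1) \<circ> Phi (ys 2)) (gen k)"
    apply (elim insertE)
    apply (simp_all add: gen_names' s1_tau s1_taup s1_alpha s1_x s1_phi inA_all_s1 s2_tau s2_taup s2_alpha s2_x s2_phi inA_all_s2 Y_expand algebra_simps)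
    using nzA nzB nzA' nzB' by (simp_all add: field_simps)
qed

lemma ps2: "Phi yp \<circ> Phi (ys 2) = Phi (ys 0) \<circ> Phi yp"
proof (rule ext_D[OF pd fhom_comp[OF fhom_Phi[OF good_p] fhom_Phi[OF good_s2]]
    fhom_comp[OF fhom_Phi[OF good_s0] fhom_Phi[OF good_p]]])
  show "\<And>a. (Phi yp \<circ> Phi (ys 2)) (D a) = D ((Phi yp \<circ> Phi (ys 2)) a)"
    by (simp add: p_D[OF pd] s2_D[OF pd])
  show "\<And>a. (Phi (ys 0) \<circ> Phi yp) (D a) = D ((Phi (ys 0) \<circ> Phi yp) a)"
    by (simp add: p_D[OF pd] s0_D[OF pd])
  fix k :: nat assume "k \<le> 5"
  then have "k \<in> {0,1,2,3,4,5}" by auto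
  then show "(Phi yp \<circ> Phi (ys 2)) (gen k) = (Phi (ys 0) \<circ> Phi yp) (gen k)"
    by (auto simp: gen_names' s2_tau s2_taup s2_alpha s2_x s2_phi inA_all_s2 s0_tau s0_taup s0_alpha s0_x s0_phi inA_all_s0 p_tau p_alpha p_x p_Y inA_all_p)
qed

lemma braid2: "Phi (ys 2) \<circ> Phi (ys 0) \<circ> Phi (ys 2) = Phi (ys 0) \<circ> Phi (ys 2) \<circ> Phi (ys 0)"
proof (rule ext_D[OF pd fhom_comp[OF fhom_comp[OF fhom_Phi[OF good_s2] fhom_Phi[OF good_s0]] fhom_Phi[OF good_s2]]
    fhom_comp[OF fhom_comp[OF fhom_Phi[OF good_s0] fhom_Phi[OF good_s2]] fhom_Phi[OF good_s0]]])
  show "\<And>a. (Phi (ys 2) \<circ> Phi (ys 0) \<circ> Phi (ys 2)) (D a) = D ((Phi (ys 2) \<circ> Phi (ys 0) \<circ> Phi (ys 2)) a)"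
    by (simp add: s2_D[OF pd] s0_D[OF pd])
  show "\<And>a. (Phi (ys 0) \<circ> Phi (ys 2) \<circ> Phi (ys 0)) (D a) = D ((Phi (ys 0) \<circ> Phi (ys 2) \<circ> Phi (ys 0)) a)"
    by (simp add: s2_D[OF pd] s0_D[OF pd])
  have nzA: "phi 0 - alpha 2 / phi 2 \<noteq> 0"
    using fhom_nz[OF fhom_Phi[OF good_s2] phi_nz[of 0]] by (simp add: s2_phi)
  have nzB: "phi 2 + alpha 0 / phi 0 \<noteq> 0"
    using fhom_nz[OF fhom_Phi[OF good_s0] phi_nz[of 2]] by (simp add: s0_phi)
  have nzA': "phi 0 * phi 2 - alpha 2 \<noteq> 0" using nzA by (simp add: field_simps)
  have nzB': "phi 2 * phi 0 + alpha 0 \<noteq> 0" using nzB by (simp add: field_simps)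
  fix k :: nat assume "k \<le> 5"
  then have "k \<in> {0,1,2,3,4,5}" by auto
  then show "(Phi (ys 2) \<circ> Phi (ys 0) \<circ> Phi (ys 2)) (gen k) = (Phi (ys 0) \<circ> Phi (ys 2) \<circ> Phi (ys 0)) (gen k)"
    apply (elim insertE)
    apply (simp_all add: gen_names' s2_tau s2_taup s2_alpha s2_x s2_phi inA_all_s2 s0_tau s0_taup s0_alpha s0_x s0_phi inA_all_s0 Y_expand algebra_simps)
    using nzA nzB nzA' nzB' by (simp_all add: field_simps)
qed

end



declare One_nat_def [simp del]

lemma all3: "(\<forall>i<(3::nat). P i) \<longleftrightarrow> P 0 \<and> P 1 \<and> P 2"
proof -
  have "\<And>i::nat. i < 3 \<longleftrightarrow> i = 0 \<or> i = 1 \<or> i = 2" by auto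
  then show ?thesis by auto
qed

lemma daut_I:
  assumes "fhom f" "bij f" "\<And>a. f (D a) = D (f a)"
  shows "diff_aut D f"
  using assms unfolding diff_aut_def fhom_def by blast

lemma phi_tau: "phi 0 = taup 1 / tau 1 - taup 2 / tau 2 + xL"
  "phi 1 = taup 2 / tau 2 - taup 0 / tau 0 + xL" "phi 2 = taup 0 / tau 0 - taup 1 / tau 1 + xL"
  unfolding phi_expand F1_def by simp_all

lemma hir:
  assumes pd: "is_prime_derivation D"
  shows "hirota D (tau 1) (tau 2) = taup 1 * tau 2 - tau 1 * taup 2 + xL * tau 1 * tau 2"
    "hirota D (tau 2) (tau 0) = taup 2 * tau 0 - tau 2 * taup 0 + xL * tau 2 * tau 0"
    "hirota D (tau 0) (tau 1) = taup 0 * tau 1 - tau 0 * taup 1 + xL * tau 0 * tau 1"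
  unfolding hirota_def D_tau[OF pd] by simp_all

lemma Yh: "Y 0 = (taup 1 * tau 2 - tau 1 * taup 2 + xL * tau 1 * tau 2) / tau 0"
    "Y 1 = (taup 2 * tau 0 - tau 2 * taup 0 + xL * tau 2 * tau 0) / tau 1"
    "Y 2 = (taup 0 * tau 1 - tau 0 * taup 1 + xL * tau 0 * tau 1) / tau 2"
  unfolding Y_expand phi_tau
  using tau_nz[of 0] tau_nz[of 1] tau_nz[of 2] by (simp_all add: field_simps)

theorem theorem3p2:
  fixes D :: "L \<Rightarrow> L"
  assumes "is_prime_derivation D"
  shows "\<exists>(s :: nat \<Rightarrow> L \<Rightarrow> L) (p :: L \<Rightarrow> L).
     (\<forall>i<3. diff_aut D (s i)) \<and> diff_aut D p \<and>
     (\<forall>i<3. s i xL = xL) \<and> p xL = xL \<and>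
     (\<forall>i<3. s i (alpha i) = - alpha i) \<and>
     (\<forall>i<3. \<forall>j<3. j \<noteq> i \<longrightarrow> s i (alpha j) = alpha j + alpha i) \<and>
     (\<forall>j<3. p (alpha j) = alpha (j+1)) \<and>
     (\<forall>i<3. s i (tau i) = hirota D (tau (i+1)) (tau (i+2)) / tau i) \<and>
     (\<forall>i<3. s i (tau i) =
        (taup (i+1) * tau (i+2) - tau (i+1) * taup (i+2) + xL * tau (i+1) * tau (i+2)) / tau i) \<and>
     (\<forall>i<3. \<forall>j<3. j \<noteq> i \<longrightarrow> s i (tau j) = tau j) \<and>
     (\<forall>j<3. p (tau j) = tau (j+1)) \<and>
     (\<forall>i<3. s i \<circ> s i = id) \<and>
     (\<forall>i<3. s i \<circ> s ((i+1) mod 3) \<circ> s i = s ((i+1) mod 3) \<circ> s i \<circ> s ((i+1) mod 3)) \<and>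
     p \<circ> p \<circ> p = id \<and>
     (\<forall>i<3. p \<circ> s i = s ((i+1) mod 3) \<circ> p) \<and>
     (\<forall>j<3. s j (phi j) = phi j) \<and>
     (\<forall>j<3. s j (phi (j+1)) = phi (j+1) - alpha j / phi j) \<and>
     (\<forall>j<3. s j (phi (j+2)) = phi (j+2) + alpha j / phi j) \<and>
     (\<forall>i<3. p (phi i) = phi (i+1))"
proof -
  note pd = assms
  have inv_s: "bij (Phi (ys i))" if "i < 3" for i
  proof -
    have "i = 0 \<or> i = 1 \<or> i = 2" using that by auto
    then show ?thesis using o_bij[OF s0_invol s0_invol] o_bij[OF s1_invol s1_invol] o_bij[OF s2_invol s2_invol]
      by auto
  qed
  have bij_p: "bij (Phi yp)"
  proof (rule o_bij[of "Phi yp \<circ> Phi yp"])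
    show "(Phi yp \<circ> Phi yp) \<circ> Phi yp = id" using p3 .
    show "Phi yp \<circ> (Phi yp \<circ> Phi yp) = id" using p3 by (simp add: o_assoc)
  qed
  have da_s: "diff_aut D (Phi (ys i))" if "i < 3" for i
  proof -
    have "i = 0 \<or> i = 1 \<or> i = 2" using that by auto
    then show ?thesis using inv_s[OF that]
      daut_I[where D=D and f="Phi (ys 0)", OF fhom_Phi[OF good_s0] _ s0_D[OF pd]]
      daut_I[where D=D and f="Phi (ys 1)", OF fhom_Phi[OF good_s1] _ s1_D[OF pd]]
      daut_I[where D=D and f="Phi (ys 2)", OF fhom_Phi[OF good_s2] _ s2_D[OF pd]] by auto
  qed
  have da_p: "diff_aut D (Phi yp)" by (rule daut_I[where D=D and f="Phi yp", OF fhom_Phi[OF good_p] bij_p p_D[OF pd]])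
  show ?thesis
    apply (rule exI[of _ "\<lambda>i. Phi (ys i)"], rule exI[of _ "Phi yp"])
    apply (simp only: all3)
    apply (intro conjI)
    apply (simp_all add: da_s da_p s0_x s1_x s2_x p_x s0_alpha s1_alpha s2_alpha p_alpha
      s0_tau s1_tau s2_tau p_tau s0_phi s1_phi s2_phi p_phi hir[OF pd] Yh nat_ar tau_Suc taup_Suc alpha_Suc phi_Suc
      s0_invol s1_invol s2_invol braid0[OF pd] braid1[OF pd] braid2[OF pd] p3 ps0[OF pd] ps1[OF pd] ps2[OF pd])
    done
qed



end
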